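(* Let $1\le y\le x$ with $x$ sufficiently large, and let $k$ be a positive integer with $k=t\cdot(\operatorname{Log}_2 x-\operatorname{Log}_2 y)$ where $t\le 10$. Then \[ \mathbb{P}\big(\omega(n_{[y,x)})=k\big)\asymp \frac{\exp\big(-(\operatorname{Log}_2 x-\operatorname{Log}_2 y)Q(t)\big)}{\sqrt{k}}, \] where $Q(t)=t\log t-t+1$ and the implied constants are absolute.
   Context: $\operatorname{Log} x\coloneqq\max\{1,\log x\}$, $\operatorname{Log}_2 x\coloneqq\operatorname{Log}(\operatorname{Log} x)$; $\omega(n)$ is the number of distinct prime factors of $n$. Random model: for each prime $p$, $n_p$ equals $1$ with probability $\frac{p}{p+1}$ and $p$ with probability $\frac1{p+1}$, independently over $p$; for $1\le y<x$, $n_{[y,x)}\coloneqq\prod_{y\le p<x}n_p$. $X\asymp Y$ means $X\ll Y\ll X$. *)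

theory Defs
  imports "HOL-Probability.Probability"
begin

definition LogM :: "real \<Rightarrow> real" where
  "LogM x = max 1 (ln x)"

definition Log2 :: "real \<Rightarrow> real" where
  "Log2 x = LogM (LogM x)"

definition omega :: "nat \<Rightarrow> nat" where
  "omega n = card (prime_factors n)"

definition primes_in :: "real \<Rightarrow> real \<Rightarrow> nat set" where
  "primes_in y x = {p. prime p \<and> y \<le> real p \<and> real p < x}"

definition np_pmf :: "nat \<Rightarrow> nat pmf" where
  "np_pmf p = map_pmf (\<lambda>b. if b then p else 1) (bernoulli_pmf (1 / (real p + 1)))"

definition np_model :: "real \<Rightarrow> real \<Rightarrow> (nat \<Rightarrow> nat) pmf" where
  "np_model y x = Pi_pmf (primes_in y x) 1 np_pmf"

definition n_interval :: "real \<Rightarrow> real \<Rightarrow> (nat \<Rightarrow> nat) \<Rightarrow> nat" where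
  "n_interval y x f = (\<Prod>p\<in>primes_in y x. f p)"

definition Q :: "real \<Rightarrow> real" where
  "Q t = t * ln t - t + 1"

end

theory Submission imports Defs begin




lemma ln_factorization:
  fixes m :: nat
  assumes "m > 0" "finite P" "prime_factors m \<subseteq> P" "\<forall>p\<in>P. prime p"
  shows "ln (real m) = (\<Sum>p\<in>P. real (multiplicity p m) * ln (real p))"
proof -
  have "real m = real (\<Prod>p \<in> prime_factors m. p ^ multiplicity p m)"
    using prime_factorization_nat[OF assms(1)] by simp
  also have "\<dots> = (\<Prod>p \<in> prime_factors m. real p ^ multiplicity p m)" by simp
  finally have "ln (real m) = ln (\<Prod>p \<in> prime_factors m. real p ^ multiplicity p m)" by simp
  also have "\<dots> = (\<Sum>p\<in>prime_factors m. ln (real p ^ multiplicity p m))"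
    by (rule ln_prod) (auto dest: in_prime_factors_imp_prime simp: prime_gt_0_nat)
  also have "\<dots> = (\<Sum>p\<in>prime_factors m. real (multiplicity p m) * ln (real p))"
    by (intro sum.cong refl) (auto simp: ln_realpow dest!: in_prime_factors_imp_prime prime_gt_0_nat)
  also have "\<dots> = (\<Sum>p\<in>P. real (multiplicity p m) * ln (real p))"
  proof (rule sum.mono_neutral_left[OF assms(2) assms(3)])
    show "\<forall>i\<in>P - prime_factors m. real (multiplicity i m) * ln (real i) = 0"
      using assms(1,4) by (auto simp: in_prime_factors_iff not_dvd_imp_multiplicity_0)
  qed
  finally show ?thesis .
qed

lemma sum_ln_primes_le:
  fixes m :: nat
  assumes "m > 0" "P \<subseteq> prime_factors m"
  shows "(\<Sum>p\<in>P. ln (real p)) \<le> ln (real m)"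
proof -
  have fin: "finite (prime_factors m)" by simp
  have "(\<Sum>p\<in>P. ln (real p)) \<le> (\<Sum>p\<in>P. real (multiplicity p m) * ln (real p))"
  proof (rule sum_mono)
    fix p assume "p \<in> P"
    then have "p \<in> prime_factors m" using assms by auto
    then have "prime p" using in_prime_factors_imp_prime by blast
    have "multiplicity p m > 0" using \<open>p \<in> prime_factors m\<close> by (simp add: prime_factors_multiplicity)
    then have "multiplicity p m \<ge> 1" by simp
    moreover have "ln (real p) \<ge> 0" using prime_ge_1_nat[OF \<open>prime p\<close>] by simp
    ultimately show "ln (real p) \<le> real (multiplicity p m) * ln (real p)"
      using mult_right_mono[of 1 "real (multiplicity p m)" "ln (real p)"] by simp
  qed
  also have "\<dots> \<le> (\<Sum>p\<in>prime_factors m. real (multiplicity p m) * ln (real p))"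
  proof (rule sum_mono2[OF fin assms(2)])
    fix b assume "b \<in> prime_factors m - P"
    then have "prime b" by (auto intro: in_prime_factors_imp_prime)
    then show "0 \<le> real (multiplicity b m) * ln (real b)"
      using prime_ge_1_nat[of b] by simp
  qed
  also have "\<dots> = ln (real m)"
    by (rule ln_factorization[symmetric]) (use assms in auto)
  finally show ?thesis .
qed

definition theta :: "nat \<Rightarrow> real" where
  "theta n = (\<Sum>p\<in>{p. p \<le> n \<and> prime p}. ln (real p))"

lemma finite_primes_le [simp]: "finite {p. p \<le> (n::nat) \<and> prime p}"
  by (rule finite_subset[of _ "{..n}"]) auto

lemma binom_odd_le: "real (Suc (2*m) choose m) \<le> 4 ^ m"
proof -
  have "(\<Sum>k\<le>m. (2 * m + 1 choose k)) = 2 ^ (2 * m)" by (rule binomial_r_part_sum)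
  then have "(2*m+1 choose m) \<le> 2 ^ (2*m)"
    by (metis atMost_iff finite_atMost le_refl member_le_sum zero_le)
  then have "real (2*m+1 choose m) \<le> 2 ^ (2*m)" by (metis of_nat_le_iff of_nat_numeral of_nat_power)
  then show ?thesis by (simp add: power_mult)
qed

lemma mid_primes_dvd:
  assumes "prime p" "m + 1 < p" "p \<le> 2*m+1"
  shows "p dvd (Suc (2*m) choose m)"
proof -
  have eq: "fact (Suc (2*m)) = (Suc (2*m) choose m) * (fact m * fact (Suc (2*m) - m))"
    using binomial_fact_lemma[of m "Suc (2*m)"] by (simp add: algebra_simps)
  have "p dvd fact (Suc (2*m))" using assms prime_dvd_fact_iff[OF assms(1), of "Suc (2*m)"] by linarith
  moreover have "\<not> p dvd fact m" using assms by (simp add: prime_dvd_fact_iff)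
  moreover have "\<not> p dvd fact (Suc (2*m) - m)"
  proof -
    have "Suc (2*m) - m = Suc m" by simp
    then show ?thesis using assms prime_dvd_fact_iff[OF assms(1), of "Suc m"] by simp
  qed
  ultimately have "p dvd (Suc (2*m) choose m) * (fact m * fact (Suc (2*m) - m))"
    by (simp only: eq[symmetric])
  moreover have "\<not> p dvd fact m * fact (Suc (2*m) - m)"
    using \<open>\<not> p dvd fact m\<close> \<open>\<not> p dvd fact (Suc (2*m) - m)\<close> prime_dvd_mult_iff[OF assms(1)] by blast
  ultimately show ?thesis using prime_dvd_mult_iff[OF assms(1)] by blast
qed

lemma theta_mono: "m \<le> n \<Longrightarrow> theta m \<le> theta n"
  unfolding theta_def
  by (rule sum_mono2) (auto dest: prime_gt_0_nat)

lemma theta_split: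
  "theta (Suc (2*m)) = theta (Suc m) + (\<Sum>p\<in>{p. Suc m < p \<and> p \<le> Suc (2*m) \<and> prime p}. ln (real p))"
proof -
  have "{p. p \<le> Suc (2*m) \<and> prime p} = {p. p \<le> Suc m \<and> prime p} \<union> {p. Suc m < p \<and> p \<le> Suc (2*m) \<and> prime p}"
    by auto
  then show ?thesis unfolding theta_def
    by (subst sum.union_disjoint[symmetric]) (auto intro: finite_subset[of _ "{..Suc (2*m)}"])
qed

lemma theta_mid: "(\<Sum>p\<in>{p. Suc m < p \<and> p \<le> Suc (2*m) \<and> prime p}. ln (real p)) \<le> real m * ln 4"
proof -
  have pos: "(Suc (2*m) choose m) > 0" by simp
  have "(\<Sum>p\<in>{p. Suc m < p \<and> p \<le> Suc (2*m) \<and> prime p}. ln (real p)) \<le> ln (real (Suc (2*m) choose m))"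
    by (rule sum_ln_primes_le[OF pos]) (auto simp: in_prime_factors_iff intro!: mid_primes_dvd)
  also have "\<dots> \<le> ln (4 ^ m)"
    using binom_odd_le pos by (subst ln_le_cancel_iff) auto
  also have "\<dots> = real m * ln 4" by (simp add: ln_realpow)
  finally show ?thesis .
qed


lemma theta_2: "theta 2 = ln 2"
proof -
  have "{p. p \<le> 2 \<and> prime p} = {2::nat}"
  proof (rule set_eqI)
    fix p :: nat show "p \<in> {p. p \<le> 2 \<and> prime p} \<longleftrightarrow> p \<in> {2}"
    proof
      assume "p \<in> {p. p \<le> 2 \<and> prime p}"
      then have "p \<le> 2" "2 \<le> p" using prime_ge_2_nat by auto
      then show "p \<in> {2}" by simp
    qed simp
  qed
  then show ?thesis by (simp add: theta_def)
qed

lemma theta_1: "theta 1 = 0"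
proof -
  have e: "{p. p \<le> 1 \<and> prime p} = ({}::nat set)"
  proof -
    have "\<not> (p \<le> 1 \<and> prime p)" for p :: nat
    proof
      assume a: "p \<le> 1 \<and> prime p"
      then have "2 \<le> p" using prime_ge_2_nat by blast
      then show False using a by simp
    qed
    then show ?thesis by blast
  qed
  show ?thesis unfolding theta_def e by simp
qed

lemma theta_le: "theta n \<le> ln 4 * real n"
proof (induction n rule: less_induct)
  case (less n)
  show ?case
  proof (cases "n \<le> 2")
    case True
    show ?thesis
    proof (cases "n \<le> 1")
      case True
      then have "theta n \<le> theta 1" by (rule theta_mono)
      moreover have "0 \<le> ln (4::real) * real n" by simp
      ultimately show ?thesis using theta_1 by linarith
    next
      case False
      then have "n = 2" using \<open>n \<le> 2\<close> by simp
      have "ln (2::real) \<le> ln 4" by simp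
      moreover have "0 \<le> ln (4::real)" by simp
      moreover have "ln 4 * real n = 2 * ln (4::real)" "theta n = ln 2" using \<open>n = 2\<close> theta_2 by simp_all
      ultimately show ?thesis by linarith
    qed
  next
    case False
    show ?thesis
    proof (cases "even n")
      case True
      have np: "\<not> prime n"
      proof
        assume "prime n"
        moreover have "n > 2" using False by simp
        ultimately have "odd n" using prime_odd_nat by blast
        then show False using True by simp
      qed
      have "{p. p \<le> n \<and> prime p} = {p. p \<le> n - 1 \<and> prime p}"
      proof (rule set_eqI)
        fix p show "p \<in> {p. p \<le> n \<and> prime p} \<longleftrightarrow> p \<in> {p. p \<le> n - 1 \<and> prime p}"
        proof (cases "p = n")
          case True then show ?thesis using np by simp
        next
          case False then show ?thesis by auto
        qed
      qed
      then have "theta n = theta (n-1)" by (simp add: theta_def)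
      also have "\<dots> \<le> ln 4 * real (n-1)" using less[of "n-1"] False by linarith
      also have "\<dots> \<le> ln 4 * real n" by simp
      finally show ?thesis .
    next
      case odd: False
      then obtain m where m: "n = Suc (2*m)" by (metis oddE Suc_eq_plus1)
      have "theta n = theta (Suc m) + (\<Sum>p\<in>{p. Suc m < p \<and> p \<le> Suc (2*m) \<and> prime p}. ln (real p))"
        using m theta_split by simp
      also have "\<dots> \<le> ln 4 * real (Suc m) + real m * ln 4"
        using less[of "Suc m"] m False theta_mid[of m] by simp
      also have "\<dots> = ln 4 * real n" using m by (simp add: algebra_simps)
      finally show ?thesis .
    qed
  qed
qed

lemma mult_le_self:
  fixes p m :: nat
  assumes "prime p" "m > 0"
  shows "multiplicity p m \<le> m"
proof -
  have "p ^ multiplicity p m dvd m" by (rule multiplicity_dvd)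
  then have "p ^ multiplicity p m \<le> m" using assms(2) by (rule dvd_imp_le)
  moreover have "multiplicity p m < 2 ^ multiplicity p m" by (rule less_exp)
  moreover have "2 ^ multiplicity p m \<le> p ^ multiplicity p m"
    using prime_ge_2_nat[OF assms(1)] by (rule power_mono) simp
  ultimately show ?thesis by linarith
qed


lemma mult_as_sum:
  fixes p m :: nat
  assumes "prime p" "m > 0" "multiplicity p m \<le> N"
  shows "multiplicity p m = (\<Sum>i\<in>{1..N}. if p ^ i dvd m then 1 else 0)"
proof -
  have iff: "p ^ i dvd m \<longleftrightarrow> i \<le> multiplicity p m" for i
  proof (rule power_dvd_iff_le_multiplicity)
    show "m \<noteq> 0" using assms(2) by simp
    show "\<not> is_unit p" using assms(1) not_prime_unit by blast
  qed
  have e: "{i\<in>{1..N}. p ^ i dvd m} = {1..multiplicity p m}"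
    unfolding iff using assms(3) by auto
  have "(\<Sum>i\<in>{1..N}. if p ^ i dvd m then 1 else 0) = (\<Sum>i\<in>{i\<in>{1..N}. p ^ i dvd m}. (1::nat))"
    by (rule sum.inter_filter[symmetric]) simp
  also have "\<dots> = card {1..multiplicity p m}" unfolding e by simp
  finally have "(\<Sum>i\<in>{1..N}. if p ^ i dvd m then 1 else 0) = card {1..multiplicity p m}" .
  then show ?thesis by simp
qed


lemma legendre:
  fixes p n :: nat
  assumes "prime p"
  shows "multiplicity p (fact n) = (\<Sum>i\<in>{1..n}. n div p ^ i)"
proof (induction n)
  case 0
  then show ?case by simp
next
  case (Suc n)
  have p1: "p > 1" using prime_gt_1_nat[OF assms] .
  have "multiplicity p (fact (Suc n) :: nat) = multiplicity p (Suc n * fact n)"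
    by (simp add: fact_Suc)
  also have "\<dots> = multiplicity p (Suc n) + multiplicity p (fact n :: nat)"
    by (rule prime_elem_multiplicity_mult_distrib) (use assms in auto)
  also have "multiplicity p (Suc n) = (\<Sum>i\<in>{1..Suc n}. if p ^ i dvd Suc n then 1 else 0)"
    by (rule mult_as_sum) (use assms mult_le_self[OF assms, of "Suc n"] in auto)
  also have "multiplicity p (fact n :: nat) = (\<Sum>i\<in>{1..Suc n}. n div p ^ i)"
  proof -
    have "n < p ^ Suc n"
    proof -
      have "n < 2 ^ n" by (rule less_exp)
      also have "\<dots> \<le> p ^ n" using p1 by (intro power_mono) auto
      also have "\<dots> \<le> p ^ Suc n" using p1 by simp
      finally show ?thesis .
    qed
    then have "n div p ^ Suc n = 0" by simp
    then show ?thesis using Suc.IH by simp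
  qed
  also have "(\<Sum>i\<in>{1..Suc n}. if p ^ i dvd Suc n then 1 else 0) + (\<Sum>i\<in>{1..Suc n}. n div p ^ i)
      = (\<Sum>i\<in>{1..Suc n}. Suc n div p ^ i)"
  proof (subst sum.distrib[symmetric], rule sum.cong[OF refl])
    fix i
    have "p ^ i > 0" using p1 by simp
    then show "(if p ^ i dvd Suc n then 1 else 0) + n div p ^ i = Suc n div p ^ i"
      by (auto simp: div_Suc dvd_eq_mod_eq_0)
  qed
  finally show ?case .
qed


lemma geom_sum_le:
  fixes x :: real
  assumes "0 \<le> x" "x < 1"
  shows "(\<Sum>i\<in>{1..N}. x ^ i) \<le> x / (1 - x)"
proof -
  have "(\<Sum>i\<in>{1..N}. x ^ i) = x * (1 - x ^ N) / (1 - x)"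
  proof (induction N)
    case 0 then show ?case by simp
  next
    case (Suc N)
    have "(\<Sum>i\<in>{1..Suc N}. x ^ i) = (\<Sum>i\<in>{1..N}. x ^ i) + x ^ Suc N" by simp
    also have "\<dots> = x * (1 - x ^ N) / (1 - x) + x ^ Suc N" using Suc by simp
    also have "\<dots> = x * (1 - x ^ Suc N) / (1 - x)" using assms
      by (simp add: field_simps)
    finally show ?case .
  qed
  also have "\<dots> \<le> x / (1 - x)" using assms
    by (intro divide_right_mono) (auto simp: mult_left_le zero_le_power power_le_one)
  finally show ?thesis .
qed


lemma mult_fact_le:
  fixes p n :: nat
  assumes "prime p"
  shows "real (multiplicity p (fact n)) \<le> real n / (real p - 1)"
proof -
  have p1: "real p \<ge> 2" using prime_ge_2_nat[OF assms] by simp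
  have "real (multiplicity p (fact n)) = (\<Sum>i\<in>{1..n}. real (n div p ^ i))"
    by (simp add: legendre[OF assms])
  also have "\<dots> \<le> (\<Sum>i\<in>{1..n}. real n * (1 / real p) ^ i)"
  proof (rule sum_mono)
    fix i
    have "real (n div p ^ i) \<le> real n / real (p ^ i)" by (rule of_nat_div_le_of_nat)
    then show "real (n div p ^ i) \<le> real n * (1 / real p) ^ i"
      by (simp add: power_divide)
  qed
  also have "\<dots> = real n * (\<Sum>i\<in>{1..n}. (1 / real p) ^ i)" by (simp add: sum_distrib_left)
  also have "\<dots> \<le> real n * ((1 / real p) / (1 - 1 / real p))"
    using p1 by (intro mult_left_mono geom_sum_le) auto
  also have "(1 / real p) / (1 - 1 / real p) = 1 / (real p - 1)" using p1
    by (simp add: field_simps)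
  finally show ?thesis by simp
qed


lemma ln_fact_primes:
  "ln (fact n :: real) = (\<Sum>p\<in>{p. p \<le> n \<and> prime p}. real (multiplicity p (fact n :: nat)) * ln (real p))"
proof -
  have "ln (fact n :: real) = ln (real (fact n :: nat))" by (simp add: of_nat_fact)
  also have "\<dots> = (\<Sum>p\<in>{p. p \<le> n \<and> prime p}. real (multiplicity p (fact n :: nat)) * ln (real p))"
  proof (rule ln_factorization)
    show "prime_factors (fact n :: nat) \<subseteq> {p. p \<le> n \<and> prime p}"
      by (auto simp: in_prime_factors_iff prime_dvd_fact_iff)
  qed auto
  finally show ?thesis .
qed


lemma ln_fact_upper: "ln (fact n :: real) \<le> real n * ln (real n)"
proof (cases "n = 0")
  case True then show ?thesis by simp
next
  case False
  have "(fact n :: real) \<le> real n ^ n"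
  proof -
    show ?thesis using fact_le_power[of n] by simp
  qed
  then have "ln (fact n :: real) \<le> ln (real n ^ n)" using False by (subst ln_le_cancel_iff) auto
  also have "\<dots> = real n * ln (real n)" using False by (simp add: ln_realpow)
  finally show ?thesis .
qed


lemma ln_fact_lower: "ln (fact n :: real) \<ge> real n * ln (real n) - real n"
proof (induction n)
  case 0 then show ?case by simp
next
  case (Suc n)
  have "ln (fact (Suc n) :: real) = ln (real (Suc n)) + ln (fact n)"
    by (simp add: ln_mult)
  also have "\<dots> \<ge> ln (real (Suc n)) + real n * ln (real n) - real n" using Suc by simp
  finally have 1: "ln (fact (Suc n) :: real) \<ge> ln (real (Suc n)) + real n * ln (real n) - real n" .
  have 2: "real n * ln (real (Suc n)) \<le> real n * ln (real n) + 1"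
  proof (cases "n = 0")
    case True then show ?thesis by simp
  next
    case False
    have "1 + 1 / real n = real (Suc n) / real n" using False by (simp add: field_simps)
    then have "ln (real (Suc n)) = ln (real n) + ln (1 + 1 / real n)"
      using False by (simp add: ln_div)
    moreover have "ln (1 + 1 / real n) \<le> 1 / real n" by (rule ln_add_one_self_le_self) simp
    ultimately have "real n * ln (real (Suc n)) \<le> real n * (ln (real n) + 1 / real n)"
      by (intro mult_left_mono) auto
    also have "\<dots> = real n * ln (real n) + 1" using False by (simp add: field_simps)
    finally show ?thesis .
  qed
  have "real (Suc n) * ln (real (Suc n)) - real (Suc n) = real n * ln (real (Suc n)) + ln (real (Suc n)) - real n - 1"
    by (simp add: algebra_simps)
  then show ?case using 1 2 by linarith
qed


lemma aux: "(a::real) > 0 \<Longrightarrow> L / ((a + 1) * a) + (2 + L) / (a + 1) = (L + a * (2 + L)) / ((a + 1) * a)"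
proof -
  assume a: "a > 0"
  have "(2 + L) / (a + 1) = ((2 + L) * a) / ((a + 1) * a)" using a by simp
  then show ?thesis by (simp add: add_divide_distrib algebra_simps)
qed

lemma sum_lnm_bound:
  assumes "n \<ge> 1"
  shows "(\<Sum>m\<in>{2..n}. ln (real m) / (real m * (real m - 1))) \<le> 2 - (2 + ln (real n)) / real n"
  using assms
proof (induction n rule: dec_induct)
  case base then show ?case by simp
next
  case (step n)
  have n1: "real n \<ge> 1" using step by simp
  have "(\<Sum>m\<in>{2..Suc n}. ln (real m) / (real m * (real m - 1)))
       = (\<Sum>m\<in>{2..n}. ln (real m) / (real m * (real m - 1))) + ln (real (Suc n)) / (real (Suc n) * real n)"
    using step by (simp add: sum.cl_ivl_Suc)
  also have "\<dots> \<le> 2 - (2 + ln (real n)) / real n + ln (real (Suc n)) / (real (Suc n) * real n)"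
    using step by simp
  also have "\<dots> \<le> 2 - (2 + ln (real (Suc n))) / real (Suc n)"
  proof -
    have "1 + 1 / real n = real (Suc n) / real n" using n1 by (simp add: field_simps)
    then have "ln (real (Suc n)) = ln (real n) + ln (1 + 1 / real n)"
      using n1 by (simp add: ln_div)
    moreover have "ln (1 + 1 / real n) \<le> 1 / real n" by (rule ln_add_one_self_le_self) simp
    ultimately have a: "(real n + 1) * (ln (real (Suc n)) - ln (real n)) \<le> 2"
    proof -
      assume e: "ln (real (Suc n)) = ln (real n) + ln (1 + 1 / real n)" and l: "ln (1 + 1 / real n) \<le> 1 / real n"
      have "(real n + 1) * (ln (real (Suc n)) - ln (real n)) = (real n + 1) * ln (1 + 1 / real n)" using e by simp
      also have "\<dots> \<le> (real n + 1) * (1 / real n)" using l by (intro mult_left_mono) auto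
      also have "\<dots> \<le> 2" using n1 by (simp add: field_simps)
      finally show ?thesis .
    qed
    have "ln (real (Suc n)) / (real (Suc n) * real n) + (2 + ln (real (Suc n))) / real (Suc n)
          \<le> (2 + ln (real n)) / real n"
    proof -
      have "ln (real (Suc n)) / (real (Suc n) * real n) + (2 + ln (real (Suc n))) / real (Suc n)
          = (ln (real (Suc n)) + real n * (2 + ln (real (Suc n)))) / (real (Suc n) * real n)"
        using aux[of "real n" "ln (real (Suc n))"] n1 by (simp add: algebra_simps)
      also have "\<dots> \<le> (real (Suc n) * (2 + ln (real n))) / (real (Suc n) * real n)"
        using a by (intro divide_right_mono) (auto simp: algebra_simps)
      also have "\<dots> = (2 + ln (real n)) / real n" using n1 by simp
      finally show ?thesis .
    qed
    then show ?thesis by linarith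
  qed
  finally show ?case .
qed


definition Amert :: "nat \<Rightarrow> real" where
  "Amert n = (\<Sum>p\<in>{p. p \<le> n \<and> prime p}. ln (real p) / real p)"


lemma sum_primes_lnpp1: "(\<Sum>p\<in>{p. p \<le> n \<and> prime p}. ln (real p) / (real p * (real p - 1))) \<le> 2"
proof (cases "n \<ge> 1")
  case False
  then have "n = 0" by simp
  then have e: "{p. p \<le> n \<and> prime p} = {}" by (auto dest: prime_gt_0_nat)
  show ?thesis unfolding e by simp
next
  case True
  have "(\<Sum>p\<in>{p. p \<le> n \<and> prime p}. ln (real p) / (real p * (real p - 1)))
      \<le> (\<Sum>m\<in>{2..n}. ln (real m) / (real m * (real m - 1)))"
    by (rule sum_mono2) (auto dest: prime_ge_2_nat)
  also have "\<dots> \<le> 2 - (2 + ln (real n)) / real n" by (rule sum_lnm_bound[OF True])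
  also have "\<dots> \<le> 2" using True by simp
  finally show ?thesis .
qed


lemma mertens1_lower:
  assumes "n \<ge> 1"
  shows "Amert n \<ge> ln (real n) - 3"
proof -
  let ?P = "{p. p \<le> n \<and> prime p}"
  have "real n * ln (real n) - real n \<le> ln (fact n :: real)" by (rule ln_fact_lower)
  also have "\<dots> = (\<Sum>p\<in>?P. real (multiplicity p (fact n :: nat)) * ln (real p))" by (rule ln_fact_primes)
  also have "\<dots> \<le> (\<Sum>p\<in>?P. real n / (real p - 1) * ln (real p))"
    by (intro sum_mono mult_right_mono mult_fact_le) (auto dest: prime_ge_1_nat)
  also have "\<dots> = (\<Sum>p\<in>?P. real n * (ln (real p) / real p) + real n * (ln (real p) / (real p * (real p - 1))))"
  proof (rule sum.cong[OF refl])
    fix p assume "p \<in> ?P"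
    then have "real p \<ge> 2" by (auto dest: prime_ge_2_nat)
    then show "real n / (real p - 1) * ln (real p) = real n * (ln (real p) / real p) + real n * (ln (real p) / (real p * (real p - 1)))"
      by (simp add: field_simps)
  qed
  also have "\<dots> = real n * Amert n + real n * (\<Sum>p\<in>?P. ln (real p) / (real p * (real p - 1)))"
    by (simp add: sum.distrib sum_distrib_left Amert_def)
  also have "\<dots> \<le> real n * Amert n + real n * 2"
    by (intro add_left_mono mult_left_mono sum_primes_lnpp1) auto
  finally have "real n * (ln (real n) - 3) \<le> real n * Amert n" by (simp add: algebra_simps)
  then show ?thesis using assms by simp
qed


lemma mertens1_upper:
  assumes "n \<ge> 1"
  shows "Amert n \<le> ln (real n) + ln 4"
proof -
  let ?P = "{p. p \<le> n \<and> prime p}"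
  have "real n * Amert n - theta n = (\<Sum>p\<in>?P. (real n / real p - 1) * ln (real p))"
    by (simp add: Amert_def theta_def sum_distrib_left sum_subtractf[symmetric] algebra_simps)
  also have "\<dots> \<le> (\<Sum>p\<in>?P. real (multiplicity p (fact n :: nat)) * ln (real p))"
  proof (intro sum_mono mult_right_mono)
    fix p assume "p \<in> ?P"
    then have pr: "prime p" by simp
    then have p0: "p > 0" by (simp add: prime_gt_0_nat)
    have "real n = real p * real (n div p) + real (n mod p)"
      by (metis div_mult_mod_eq of_nat_add of_nat_mult mult.commute)
    moreover have "real (n mod p) < real p" using p0 by simp
    ultimately have "real n / real p - 1 \<le> real (n div p)" using p0
      by (simp add: field_simps)
    also have "real (n div p) \<le> real (multiplicity p (fact n :: nat))"
    proof -
      have "n div p \<le> multiplicity p (fact n :: nat)"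
      proof -
        have "n div p ^ 1 \<le> (\<Sum>i\<in>{1..n}. n div p ^ i)" by (rule member_le_sum) (use assms in auto)
        then show ?thesis using legendre[OF pr, of n] by simp
      qed
      then show ?thesis by simp
    qed
    finally show "real n / real p - 1 \<le> real (multiplicity p (fact n :: nat))" .
    show "0 \<le> ln (real p)" using prime_ge_1_nat[OF pr] by simp
  qed
  also have "\<dots> = ln (fact n :: real)" by (rule ln_fact_primes[symmetric])
  also have "\<dots> \<le> real n * ln (real n)" by (rule ln_fact_upper)
  finally have "real n * Amert n \<le> real n * ln (real n) + theta n" by simp
  also have "\<dots> \<le> real n * ln (real n) + ln 4 * real n" using theta_le[of n] by simp
  finally have "real n * Amert n \<le> real n * (ln (real n) + ln 4)" by (simp add: algebra_simps)
  then show ?thesis using assms by simp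
qed





lemma sum_primes_Suc:
  "(\<Sum>p\<in>{p. p \<le> Suc n \<and> prime p}. f p) = (\<Sum>p\<in>{p. p \<le> n \<and> prime p}. f p) + (if prime (Suc n) then f (Suc n) else 0)"
proof (cases "prime (Suc n)")
  case True
  have "{p. p \<le> Suc n \<and> prime p} = insert (Suc n) {p. p \<le> n \<and> prime p}" using True by (auto simp: le_Suc_eq)
  then show ?thesis using True by (simp add: add.commute)
next
  case False
  have "{p. p \<le> Suc n \<and> prime p} = {p. p \<le> n \<and> prime p}" using False by (auto simp: le_Suc_eq)
  then show ?thesis using False by simp
qed

definition Srec :: "nat \<Rightarrow> real" where
  "Srec n = (\<Sum>p\<in>{p. p \<le> n \<and> prime p}. 1 / real p)"

definition Wf :: "nat \<Rightarrow> real" where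
  "Wf n = Srec n - Amert n / ln (real n) - ln (ln (real n))"

lemma ln_ratio_bounds:
  fixes b :: nat
  assumes "b \<ge> 2"
  defines "L0 \<equiv> ln (real b)" and "L1 \<equiv> ln (real (Suc b))"
  shows "1 - L0 / L1 \<le> ln (ln (real (Suc b))) - ln (ln (real b))"
    and "ln (ln (real (Suc b))) - ln (ln (real b)) \<le> 1 - L0 / L1 + (1 / L0 - 1 / L1)"
proof -
  have L0p: "L0 > 0" unfolding L0_def using assms by simp
  have L01: "L0 < L1" unfolding L0_def L1_def using assms by simp
  have L1p: "L1 > 0" using L0p L01 by simp
  have eq: "ln (ln (real (Suc b))) - ln (ln (real b)) = ln (L1 / L0)"
    unfolding L0_def L1_def using L0p L1p L0_def L1_def by (simp add: ln_div)
  have "ln (L0 / L1) \<le> L0 / L1 - 1" using L0p L1p by (intro ln_le_minus_one) simp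
  moreover have "ln (L0 / L1) = - ln (L1 / L0)" using L0p L1p by (simp add: ln_div)
  ultimately show "1 - L0 / L1 \<le> ln (ln (real (Suc b))) - ln (ln (real b))" using eq by simp
  have "ln (L1 / L0) \<le> L1 / L0 - 1" using L0p L1p by (intro ln_le_minus_one) simp
  also have "L1 / L0 - 1 = 1 - L0 / L1 + (L1 - L0) * (1 / L0 - 1 / L1)" using L0p L1p
    by (simp add: field_simps)
  also have "(L1 - L0) * (1 / L0 - 1 / L1) \<le> 1 * (1 / L0 - 1 / L1)"
  proof (rule mult_right_mono)
    have "L1 - L0 = ln (1 + 1 / real b)"
    proof -
      have "1 + 1 / real b = real (Suc b) / real b" using assms by (simp add: field_simps)
      then show ?thesis unfolding L0_def L1_def using assms by (simp add: ln_div)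
    qed
    also have "\<dots> \<le> 1 / real b" by (rule ln_add_one_self_le_self) simp
    also have "\<dots> \<le> 1" using assms by simp
    finally show "L1 - L0 \<le> 1" .
    show "0 \<le> 1 / L0 - 1 / L1" using L0p L01 by (simp add: frac_le)
  qed
  finally show "ln (ln (real (Suc b))) - ln (ln (real b)) \<le> 1 - L0 / L1 + (1 / L0 - 1 / L1)"
    using eq by simp
qed

lemma Wf_step:
  fixes b :: nat
  assumes "b \<ge> 2"
  shows "\<bar>Wf (Suc b) - Wf b\<bar> \<le> 4 * (1 / ln (real b) - 1 / ln (real (Suc b)))"
proof -
  define L0 where "L0 = ln (real b)"
  define L1 where "L1 = ln (real (Suc b))"
  define d where "d = 1 / L0 - 1 / L1"
  have L0p: "L0 > 0" unfolding L0_def using assms by simp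
  have L01: "L0 < L1" unfolding L0_def L1_def using assms by simp
  have L1p: "L1 > 0" using L0p L01 by simp
  have d0: "d \<ge> 0" unfolding d_def using L0p L01 by (simp add: frac_le)
  have SS: "Srec (Suc b) - Srec b = (Amert (Suc b) - Amert b) / L1"
  proof -
    have "Srec (Suc b) - Srec b = (if prime (Suc b) then 1 / real (Suc b) else 0)"
      unfolding Srec_def by (subst sum_primes_Suc) simp
    moreover have "Amert (Suc b) - Amert b = (if prime (Suc b) then L1 / real (Suc b) else 0)"
      unfolding Amert_def L1_def by (subst sum_primes_Suc) simp
    ultimately show ?thesis using L1p by simp
  qed
  have V: "(Srec (Suc b) - Amert (Suc b) / L1) - (Srec b - Amert b / L0) = Amert b * d"
  proof -
    have "(Srec (Suc b) - Amert (Suc b) / L1) - (Srec b - Amert b / L0) = (Srec (Suc b) - Srec b) - Amert (Suc b) / L1 + Amert b / L0" by simp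
    also have "\<dots> = (Amert (Suc b) - Amert b) / L1 - Amert (Suc b) / L1 + Amert b / L0" using SS by simp
    also have "\<dots> = Amert b * d" unfolding d_def using L0p L1p by (simp add: field_simps)
    finally show ?thesis .
  qed
  have "ln (4::real) \<le> 4 - 1" by (rule ln_le_minus_one) simp
  then have Aup: "Amert b \<le> L0 + 3" using mertens1_upper[of b] assms unfolding L0_def
    by simp
  have Alo: "Amert b \<ge> L0 - 3" using mertens1_lower[of b] assms unfolding L0_def by simp
  have u: "L0 * d = 1 - L0 / L1" unfolding d_def using L0p L1p by (simp add: field_simps)
  have lb: "1 - L0 / L1 \<le> ln L1 - ln L0" and ub: "ln L1 - ln L0 \<le> 1 - L0 / L1 + d"
    using ln_ratio_bounds[OF assms] unfolding L0_def L1_def d_def by auto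
  have "Wf (Suc b) - Wf b = Amert b * d - (ln L1 - ln L0)"
    unfolding Wf_def L0_def[symmetric] L1_def[symmetric] using V by simp
  moreover have "Amert b * d \<le> (L0 + 3) * d" using Aup d0 by (rule mult_right_mono)
  moreover have "Amert b * d \<ge> (L0 - 3) * d" using Alo d0 by (rule mult_right_mono)
  ultimately have "\<bar>Wf (Suc b) - Wf b\<bar> \<le> 4 * d" using lb ub u d0
    by (simp add: algebra_simps abs_le_iff)
  then show ?thesis unfolding d_def L0_def L1_def .
qed

lemma Wf_diff:
  fixes a b :: nat
  assumes "2 \<le> a" "a \<le> b"
  shows "\<bar>Wf b - Wf a\<bar> \<le> 4 * (1 / ln (real a) - 1 / ln (real b))"
  using assms(2)
proof (induction b rule: dec_induct)
  case base then show ?case by simp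
next
  case (step n)
  have "\<bar>Wf (Suc n) - Wf a\<bar> \<le> \<bar>Wf (Suc n) - Wf n\<bar> + \<bar>Wf n - Wf a\<bar>" by simp
  also have "\<dots> \<le> 4 * (1 / ln (real n) - 1 / ln (real (Suc n))) + 4 * (1 / ln (real a) - 1 / ln (real n))"
    using Wf_step[of n] step assms by (intro add_mono) auto
  finally show ?case by (simp add: algebra_simps)
qed

lemma A_over_ln:
  fixes n :: nat
  assumes "n \<ge> 2"
  shows "\<bar>Amert n / ln (real n) - 1\<bar> \<le> 3 / ln (real n)"
proof -
  have Lp: "ln (real n) > 0" using assms by simp
  have "ln (4::real) \<le> 4 - 1" by (rule ln_le_minus_one) simp
  then have "Amert n \<le> ln (real n) + 3" using mertens1_upper[of n] assms by simp
  moreover have "Amert n \<ge> ln (real n) - 3" using mertens1_lower[of n] assms by simp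
  ultimately have "\<bar>Amert n - ln (real n)\<bar> \<le> 3" by simp
  then have "\<bar>Amert n - ln (real n)\<bar> / ln (real n) \<le> 3 / ln (real n)" using Lp by (intro divide_right_mono) auto
  moreover have "Amert n / ln (real n) - 1 = (Amert n - ln (real n)) / ln (real n)" using Lp by (simp add: field_simps)
  ultimately show ?thesis using Lp by simp
qed

lemma mertens2_nat:
  fixes a b :: nat
  assumes "2 \<le> a" "a \<le> b"
  shows "\<bar>Srec b - Srec a - (ln (ln (real b)) - ln (ln (real a)))\<bar> \<le> 10 / ln (real a)"
proof -
  have La: "ln (real a) > 0" using assms by simp
  have Lab: "ln (real a) \<le> ln (real b)" using assms by simp
  have Lb: "ln (real b) > 0" using La Lab by simp
  have e: "Srec b - Srec a - (ln (ln (real b)) - ln (ln (real a))) = (Wf b - Wf a) + (Amert b / ln (real b) - 1) - (Amert a / ln (real a) - 1)"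
    unfolding Wf_def by simp
  have ib: "1 / ln (real b) \<ge> 0" using Lb by simp
  have "\<bar>Wf b - Wf a\<bar> \<le> 4 * (1 / ln (real a) - 1 / ln (real b))" using Wf_diff[OF assms] .
  moreover have "4 / ln (real b) \<ge> 0" using Lb by simp
  moreover have "4 * (1 / ln (real a) - 1 / ln (real b)) = 4 / ln (real a) - 4 / ln (real b)" by simp
  ultimately have w: "\<bar>Wf b - Wf a\<bar> \<le> 4 / ln (real a)" by linarith
  have "3 / ln (real b) \<le> 3 / ln (real a)" using La Lab by (intro divide_left_mono) auto
  then have x: "\<bar>Amert b / ln (real b) - 1\<bar> \<le> 3 / ln (real a)"
    using A_over_ln[of b] assms by linarith
  have y: "\<bar>Amert a / ln (real a) - 1\<bar> \<le> 3 / ln (real a)" using A_over_ln[of a] assms by simp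
  have "10 / ln (real a) = 4 / ln (real a) + 3 / ln (real a) + 3 / ln (real a)" by (simp add: field_simps)
  then show ?thesis unfolding e using w x y by linarith
qed



definition rsum :: "real \<Rightarrow> real \<Rightarrow> real" where
  "rsum y x = (\<Sum>p\<in>primes_in y x. 1 / real p)"

lemma finite_primes_in [simp]: "finite (primes_in y x)"
proof -
  have "primes_in y x \<subseteq> {..nat \<lceil>x\<rceil>}"
  proof
    fix p assume "p \<in> primes_in y x"
    then have "real p < x" unfolding primes_in_def by simp
    then have "int p < \<lceil>x\<rceil>" by (simp add: less_ceiling_iff)
    then show "p \<in> {..nat \<lceil>x\<rceil>}" by simp
  qed
  then show ?thesis by (rule finite_subset) simp
qed

lemma primes_in_Srec:
  fixes y x :: real
  assumes "1 \<le> y" "y \<le> x"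
  defines "a \<equiv> nat (\<lceil>y\<rceil> - 1)" and "b \<equiv> nat (\<lceil>x\<rceil> - 1)"
  shows "rsum y x = Srec b - Srec a"
    and "real a < y" "y \<le> real a + 1" "real b < x" "x \<le> real b + 1" "a \<le> b"
proof -
  have cy: "\<lceil>y\<rceil> \<ge> 1" using assms(1) by simp
  have cx: "\<lceil>x\<rceil> \<ge> 1" using assms by simp
  have ai: "int a = \<lceil>y\<rceil> - 1" unfolding a_def using cy by simp
  have bi: "int b = \<lceil>x\<rceil> - 1" unfolding b_def using cx by simp
  have ya: "y \<le> real p \<longleftrightarrow> a < p" for p :: nat
  proof -
    have "y \<le> real p \<longleftrightarrow> \<lceil>y\<rceil> \<le> int p" by (simp add: ceiling_le_iff)
    also have "\<dots> \<longleftrightarrow> int a < int p" using ai by linarith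
    finally show ?thesis by simp
  qed
  have xb: "real p < x \<longleftrightarrow> p \<le> b" for p :: nat
  proof -
    have "real p < x \<longleftrightarrow> int p < \<lceil>x\<rceil>" by (simp add: less_ceiling_iff)
    also have "\<dots> \<longleftrightarrow> int p \<le> int b" using bi by linarith
    finally show ?thesis by simp
  qed
  have ar: "real a = real_of_int \<lceil>y\<rceil> - 1"
  proof -
    have "real a = real_of_int (int a)" by simp
    also have "\<dots> = real_of_int \<lceil>y\<rceil> - 1" using ai by simp
    finally show ?thesis .
  qed
  have br: "real b = real_of_int \<lceil>x\<rceil> - 1"
  proof -
    have "real b = real_of_int (int b)" by simp
    also have "\<dots> = real_of_int \<lceil>x\<rceil> - 1" using bi by simp
    finally show ?thesis .
  qed
  show "real a < y" using ar ceiling_correct[of y] by linarith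
  show "y \<le> real a + 1" using ar ceiling_correct[of y] by linarith
  show "real b < x" using br ceiling_correct[of x] by linarith
  show "x \<le> real b + 1" using br ceiling_correct[of x] by linarith
  show "a \<le> b" using ai bi ceiling_mono[OF assms(2)] by linarith
  have eq: "primes_in y x = {p. p \<le> b \<and> prime p} - {p. p \<le> a \<and> prime p}"
    unfolding primes_in_def using ya xb by auto
  have sub: "{p. p \<le> a \<and> prime p} \<subseteq> {p. p \<le> b \<and> prime p}" using \<open>a \<le> b\<close> by auto
  show "rsum y x = Srec b - Srec a"
    unfolding rsum_def Srec_def eq by (rule sum_diff) (use sub in auto)
qed

lemma lnln_close:
  fixes b :: nat and x :: real
  assumes "b \<ge> 2" "real b \<le> x" "x \<le> real b + 1"
  shows "0 \<le> ln (ln x) - ln (ln (real b))" "ln (ln x) - ln (ln (real b)) \<le> 1 / ln (real b)"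
proof -
  have b0: "real b > 0" using assms by simp
  have Lb: "ln (real b) > 0" using assms by simp
  have Lbx: "ln (real b) \<le> ln x" using assms b0 by simp
  then have Lx: "ln x > 0" using Lb by simp
  show "0 \<le> ln (ln x) - ln (ln (real b))" using Lb Lbx by simp
  have "ln (ln x) - ln (ln (real b)) = ln (ln x / ln (real b))" using Lb Lx by (simp add: ln_div)
  also have "\<dots> \<le> ln x / ln (real b) - 1" using Lb Lx by (intro ln_le_minus_one) simp
  also have "\<dots> = (ln x - ln (real b)) / ln (real b)" using Lb by (simp add: field_simps)
  also have "\<dots> \<le> 1 / ln (real b)"
  proof (rule divide_right_mono)
    have "ln x - ln (real b) = ln (x / real b)" using b0 assms by (simp add: ln_div)
    also have "\<dots> \<le> x / real b - 1" using b0 assms by (intro ln_le_minus_one) simp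
    also have "\<dots> \<le> 1"
    proof -
      have "x \<le> 2 * real b" using assms by simp
      then show ?thesis using b0 by (simp add: field_simps)
    qed
    finally show "ln x - ln (real b) \<le> 1" .
  qed (use Lb in simp)
  finally show "ln (ln x) - ln (ln (real b)) \<le> 1 / ln (real b)" .
qed

lemma mertens2_real:
  fixes x y :: real
  assumes "3 \<le> y" "y \<le> x"
  shows "\<bar>rsum y x - (ln (ln x) - ln (ln y))\<bar> \<le> 24 / ln y"
proof -
  define a where "a = nat (\<lceil>y\<rceil> - 1)"
  define b where "b = nat (\<lceil>x\<rceil> - 1)"
  have y1: "1 \<le> y" using assms by simp
  note P = primes_in_Srec[OF y1 assms(2), folded a_def b_def]
  have a2: "a \<ge> 2" using P(3) assms(1) by simp
  have ab: "a \<le> b" using P(6) .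
  have b2: "b \<ge> 2" using a2 ab by simp
  have La: "ln (real a) > 0" using a2 by simp
  have Lab: "ln (real a) \<le> ln (real b)" using a2 ab by simp
  have m: "\<bar>Srec b - Srec a - (ln (ln (real b)) - ln (ln (real a)))\<bar> \<le> 10 / ln (real a)"
    by (rule mertens2_nat[OF a2 ab])
  have cx: "0 \<le> ln (ln x) - ln (ln (real b))" "ln (ln x) - ln (ln (real b)) \<le> 1 / ln (real b)"
    using lnln_close[OF b2, of x] P by auto
  have cy: "0 \<le> ln (ln y) - ln (ln (real a))" "ln (ln y) - ln (ln (real a)) \<le> 1 / ln (real a)"
    using lnln_close[OF a2, of y] P by auto
  have "1 / ln (real b) \<le> 1 / ln (real a)" using La Lab by (intro divide_left_mono) auto
  then have tot: "\<bar>rsum y x - (ln (ln x) - ln (ln y))\<bar> \<le> 12 / ln (real a)"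
    using m cx cy P(1) by (simp add: abs_le_iff)
  have "ln y \<le> 2 * ln (real a)"
  proof -
    have "y \<le> real a * real a"
    proof -
      have "y - 1 \<le> real a" using P(3) by simp
      then have "(y - 1) * (y - 1) \<le> real a * real a" using assms by (intro mult_mono) auto
      moreover have "y \<le> (y - 1) * (y - 1)"
      proof -
        have "0 \<le> y * (y - 3)" using assms by simp
        then show ?thesis by (simp add: algebra_simps)
      qed
      ultimately show ?thesis by simp
    qed
    then have "ln y \<le> ln (real a * real a)" using assms by simp
    also have "\<dots> = 2 * ln (real a)" using a2 by (simp add: ln_mult)
    finally show ?thesis .
  qed
  then have "12 / ln (real a) \<le> 24 / ln y"
    using La assms by (simp add: field_simps)
  with tot show ?thesis by simp
qed



definition esym :: "(nat \<Rightarrow> real) \<Rightarrow> nat set \<Rightarrow> nat \<Rightarrow> real" where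
  "esym a S k = (\<Sum>T\<in>{T. T \<subseteq> S \<and> card T = k}. \<Prod>p\<in>T. a p)"

definition ft :: "nat set \<Rightarrow> nat \<Rightarrow> nat" where
  "ft T = (\<lambda>q. if q \<in> T then q else 1)"

lemma pmf_np:
  assumes "prime q"
  shows "pmf (np_pmf q) q = 1 / (real q + 1)"
    and "pmf (np_pmf q) 1 = real q / (real q + 1)"
    and "v \<noteq> 1 \<Longrightarrow> v \<noteq> q \<Longrightarrow> pmf (np_pmf q) v = 0"
proof -
  have q1: "q \<noteq> 1" using assms by auto
  have r0: "0 \<le> 1 / (real q + 1)" "1 / (real q + 1) \<le> 1" by (auto simp: field_simps)
  let ?g = "\<lambda>b. if b then q else 1"
  have "?g -` {q} = {True}" using q1 by (auto split: if_splits)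
  then show "pmf (np_pmf q) q = 1 / (real q + 1)"
    unfolding np_pmf_def pmf_map using r0 by (simp add: measure_pmf_single)
  have "?g -` {1} = {False}" using q1 by (auto split: if_splits)
  then show "pmf (np_pmf q) 1 = real q / (real q + 1)"
    unfolding np_pmf_def pmf_map using r0 by (simp add: measure_pmf_single field_simps)
  assume "v \<noteq> 1" "v \<noteq> q"
  then have "?g -` {v} = {}" by (auto split: if_splits)
  then show "pmf (np_pmf q) v = 0"
    unfolding np_pmf_def pmf_map by simp
qed

lemma primes_in_prime: "p \<in> primes_in y x \<Longrightarrow> prime p"
  unfolding primes_in_def by simp

lemma finite_primes_in_dup [simp]: "finite (primes_in y x)"
proof -
  have "primes_in y x \<subseteq> {..nat \<lceil>x\<rceil>}"
  proof
    fix p assume "p \<in> primes_in y x"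
    then have "real p < x" unfolding primes_in_def by simp
    then have "int p < \<lceil>x\<rceil>" by (simp add: less_ceiling_iff)
    then show "p \<in> {..nat \<lceil>x\<rceil>}" by simp
  qed
  then show ?thesis by (rule finite_subset) simp
qed

lemma omega_ft:
  assumes "T \<subseteq> primes_in y x"
  shows "omega (n_interval y x (ft T)) = card T"
proof -
  let ?S = "primes_in y x"
  have fin: "finite T" by (rule finite_subset[OF assms]) simp
  have "n_interval y x (ft T) = (\<Prod>p\<in>?S. if p \<in> T then p else 1)"
    unfolding n_interval_def ft_def by simp
  also have "\<dots> = (\<Prod>p\<in>?S \<inter> T. p)" by (rule prod.inter_restrict[symmetric]) simp
  also have "?S \<inter> T = T" using assms by auto
  finally have e: "n_interval y x (ft T) = (\<Prod>p\<in>T. p)" .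
  have pr: "\<And>p. p \<in> T \<Longrightarrow> prime p" using assms primes_in_prime by auto
  have "prime_factors (\<Prod>p\<in>T. p) = (\<Union>p\<in>T. prime_factors p)"
  proof -
    have z: "0 \<notin> T" using pr by force
    then show ?thesis using prime_factors_prod[OF fin, of "\<lambda>p. p"] by simp
  qed
  also have "\<dots> = (\<Union>p\<in>T. {p})" using pr prime_prime_factors by (intro SUP_cong refl) auto
  also have "\<dots> = T" by auto
  finally show ?thesis unfolding omega_def e by simp
qed

lemma pmf_ft:
  assumes "T \<subseteq> primes_in y x"
  shows "pmf (np_model y x) (ft T) = (\<Prod>p\<in>primes_in y x. real p / (real p + 1)) * (\<Prod>p\<in>T. 1 / real p)"
proof -
  let ?S = "primes_in y x"
  have out: "\<forall>q. q \<notin> ?S \<longrightarrow> ft T q = 1" using assms unfolding ft_def by auto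
  have "pmf (np_model y x) (ft T) = (\<Prod>q\<in>?S. pmf (np_pmf q) (ft T q))"
    unfolding np_model_def using out by (subst pmf_Pi) auto
  also have "\<dots> = (\<Prod>q\<in>?S. real q / (real q + 1) * (if q \<in> T then 1 / real q else 1))"
  proof (rule prod.cong[OF refl])
    fix q assume q: "q \<in> ?S"
    then have pq: "prime q" by (rule primes_in_prime)
    then have "real q > 0" by (simp add: prime_gt_0_nat)
    then show "pmf (np_pmf q) (ft T q) = real q / (real q + 1) * (if q \<in> T then 1 / real q else 1)"
      unfolding ft_def using pmf_np[OF pq] by (auto simp: field_simps)
  qed
  also have "\<dots> = (\<Prod>q\<in>?S. real q / (real q + 1)) * (\<Prod>q\<in>?S. if q \<in> T then 1 / real q else 1)"
    by (rule prod.distrib)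
  also have "(\<Prod>q\<in>?S. if q \<in> T then 1 / real q else 1) = (\<Prod>q\<in>?S \<inter> T. 1 / real q)"
    by (rule prod.inter_restrict[symmetric]) simp
  also have "?S \<inter> T = T" using assms by auto
  finally show ?thesis .
qed

lemma prob_omega:
  "measure_pmf.prob (np_model y x) {f. omega (n_interval y x f) = k}
     = (\<Prod>p\<in>primes_in y x. real p / (real p + 1)) * esym (\<lambda>p. 1 / real p) (primes_in y x) k"
proof -
  let ?S = "primes_in y x"
  let ?M = "np_model y x"
  let ?E = "{f. omega (n_interval y x f) = k}"
  let ?U = "{T. T \<subseteq> ?S \<and> card T = k}"
  let ?F = "ft ` ?U"
  have finU: "finite ?U" by (rule finite_subset[of _ "Pow ?S"]) auto
  have FE: "?F \<subseteq> ?E" using omega_ft by auto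
  have inj: "inj_on ft ?U"
  proof (rule inj_onI)
    fix T1 T2 assume T1: "T1 \<in> ?U" and T2: "T2 \<in> ?U" and e: "ft T1 = ft T2"
    have H: "T = {q \<in> ?S. ft T q \<noteq> 1}" if "T \<subseteq> ?S" for T
    proof -
      have "q \<noteq> 1" if "q \<in> ?S" for q using primes_in_prime[OF that] by auto
      then show ?thesis using that unfolding ft_def by auto
    qed
    have a: "T1 = {q \<in> ?S. ft T1 q \<noteq> 1}" using T1 by (intro H) simp
    have b: "T2 = {q \<in> ?S. ft T2 q \<noteq> 1}" using T2 by (intro H) simp
    show "T1 = T2" using a b e by simp
  qed
  have "measure_pmf.prob ?M ?E = measure_pmf.prob ?M ?F"
  proof (rule measure_prob_cong_0)
    fix f assume f: "f \<in> ?E - ?F"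
    show "pmf ?M f = 0"
    proof (rule ccontr)
      assume nz: "pmf ?M f \<noteq> 0"
      then have out: "\<forall>q. q \<notin> ?S \<longrightarrow> f q = 1"
        unfolding np_model_def by (subst (asm) pmf_Pi) (auto split: if_splits)
      have pr: "(\<Prod>q\<in>?S. pmf (np_pmf q) (f q)) \<noteq> 0"
        using nz out unfolding np_model_def by (subst (asm) pmf_Pi) auto
      have vals: "f q = 1 \<or> f q = q" if "q \<in> ?S" for q
      proof (rule ccontr)
        assume "\<not> (f q = 1 \<or> f q = q)"
        then have "pmf (np_pmf q) (f q) = 0" using pmf_np(3)[OF primes_in_prime[OF that]] by auto
        then have "(\<Prod>q\<in>?S. pmf (np_pmf q) (f q)) = 0" using that by (intro prod_zero) auto
        then show False using pr by simp
      qed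
      define T where "T = {q \<in> ?S. f q = q}"
      have TS: "T \<subseteq> ?S" unfolding T_def by auto
      have "f = ft T"
      proof
        fix q show "f q = ft T q"
        proof (cases "q \<in> ?S")
          case True
          then show ?thesis using vals[OF True] unfolding T_def ft_def by auto
        next
          case False
          then show ?thesis using out unfolding T_def ft_def by auto
        qed
      qed
      then have "card T = k" using f omega_ft[OF TS] by simp
      then have "f \<in> ?F" using \<open>f = ft T\<close> TS by auto
      then show False using f by simp
    qed
  next
    fix f assume "f \<in> ?F - ?E"
    then show "pmf ?M f = 0" using FE by auto
  qed
  also have "\<dots> = sum (pmf ?M) ?F" by (rule measure_measure_pmf_finite) (use finU in simp)
  also have "\<dots> = (\<Sum>T\<in>?U. pmf ?M (ft T))" by (rule sum.reindex[OF inj, unfolded comp_def])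
  also have "\<dots> = (\<Sum>T\<in>?U. (\<Prod>p\<in>?S. real p / (real p + 1)) * (\<Prod>p\<in>T. 1 / real p))"
    by (rule sum.cong[OF refl]) (auto intro: pmf_ft)
  also have "\<dots> = (\<Prod>p\<in>?S. real p / (real p + 1)) * esym (\<lambda>p. 1 / real p) ?S k"
    unfolding esym_def by (simp add: sum_distrib_left)
  finally show ?thesis .
qed



lemma esym_empty: "esym a {} k = (if k = 0 then 1 else 0)"
proof (cases "k = 0")
  case True
  have e: "{T. T \<subseteq> {} \<and> card T = k} = {{}}" using True by auto
  show ?thesis unfolding esym_def e using True by simp
next
  case False
  have e: "{T. T \<subseteq> {} \<and> card T = k} = {}" using False by auto
  show ?thesis unfolding esym_def e using False by simp
qed

lemma esym_0: "finite S \<Longrightarrow> esym a S 0 = 1"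
proof -
  assume fin: "finite S"
  have "{T. T \<subseteq> S \<and> card T = 0} = {{}}"
  proof (rule set_eqI)
    fix T show "T \<in> {T. T \<subseteq> S \<and> card T = 0} \<longleftrightarrow> T \<in> {{}}"
    proof
      assume "T \<in> {T. T \<subseteq> S \<and> card T = 0}"
      moreover then have "finite T" using fin by (auto intro: finite_subset)
      ultimately show "T \<in> {{}}" by auto
    qed auto
  qed
  then show ?thesis unfolding esym_def by simp
qed

lemma esym_insert:
  assumes fin: "finite S" and q: "q \<notin> S"
  shows "esym a (insert q S) (Suc k) = esym a S (Suc k) + a q * esym a S k"
proof -
  let ?A = "{T. T \<subseteq> S \<and> card T = Suc k}"
  let ?B = "{T. T \<subseteq> S \<and> card T = k}"
  have eq: "{T. T \<subseteq> insert q S \<and> card T = Suc k} = ?A \<union> insert q ` ?B"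
  proof (rule set_eqI)
    fix T
    show "T \<in> {T. T \<subseteq> insert q S \<and> card T = Suc k} \<longleftrightarrow> T \<in> ?A \<union> insert q ` ?B"
    proof
      assume T: "T \<in> {T. T \<subseteq> insert q S \<and> card T = Suc k}"
      then have finT: "finite T" using fin by (auto intro: finite_subset)
      show "T \<in> ?A \<union> insert q ` ?B"
      proof (cases "q \<in> T")
        case False
        then show ?thesis using T by auto
      next
        case True
        have "T - {q} \<in> ?B" using T True finT by auto
        moreover have "T = insert q (T - {q})" using True by auto
        ultimately show ?thesis by blast
      qed
    next
      assume T: "T \<in> ?A \<union> insert q ` ?B"
      then show "T \<in> {T. T \<subseteq> insert q S \<and> card T = Suc k}"
      proof
        assume "T \<in> ?A" then show ?thesis by auto
      next
        assume "T \<in> insert q ` ?B"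
        then obtain U where U: "U \<in> ?B" "T = insert q U" by auto
        have "finite U" using U fin by (auto intro: finite_subset)
        moreover have "q \<notin> U" using U q by auto
        ultimately show ?thesis using U by auto
      qed
    qed
  qed
  have finA: "finite ?A" by (rule finite_subset[of _ "Pow S"]) (use fin in auto)
  have finB: "finite ?B" by (rule finite_subset[of _ "Pow S"]) (use fin in auto)
  have disj: "?A \<inter> insert q ` ?B = {}" using q by auto
  have inj: "inj_on (insert q) ?B"
  proof (rule inj_onI)
    fix U V assume "U \<in> ?B" "V \<in> ?B" "insert q U = insert q V"
    then show "U = V" using q by (metis (no_types, lifting) insert_ident mem_Collect_eq subset_iff)
  qed
  have "esym a (insert q S) (Suc k) = (\<Sum>T\<in>?A. prod a T) + (\<Sum>T\<in>insert q ` ?B. prod a T)"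
    unfolding esym_def eq by (rule sum.union_disjoint) (use finA finB disj in auto)
  also have "(\<Sum>T\<in>insert q ` ?B. prod a T) = (\<Sum>U\<in>?B. prod a (insert q U))"
    by (rule sum.reindex[OF inj, unfolded comp_def])
  also have "\<dots> = (\<Sum>U\<in>?B. a q * prod a U)"
  proof (rule sum.cong[OF refl])
    fix U assume U: "U \<in> ?B"
    then have "finite U" "q \<notin> U" using fin q by (auto intro: finite_subset)
    then show "prod a (insert q U) = a q * prod a U" by simp
  qed
  also have "\<dots> = a q * esym a S k" unfolding esym_def by (simp add: sum_distrib_left)
  finally show ?thesis unfolding esym_def by simp
qed

lemma esym_nonneg: "(\<And>p. p \<in> S \<Longrightarrow> a p \<ge> 0) \<Longrightarrow> esym a S k \<ge> 0"
  unfolding esym_def by (intro sum_nonneg prod_nonneg) auto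

lemma esym_mono:
  assumes "finite S" "S' \<subseteq> S" "\<And>p. p \<in> S \<Longrightarrow> a p \<ge> 0"
  shows "esym a S' k \<le> esym a S k"
  unfolding esym_def
proof (rule sum_mono2)
  show "finite {T. T \<subseteq> S \<and> card T = k}" by (rule finite_subset[of _ "Pow S"]) (use assms in auto)
  show "{T. T \<subseteq> S' \<and> card T = k} \<subseteq> {T. T \<subseteq> S \<and> card T = k}" using assms by auto
  show "\<And>T. T \<in> {T. T \<subseteq> S \<and> card T = k} - {T. T \<subseteq> S' \<and> card T = k} \<Longrightarrow> 0 \<le> prod a T"
    using assms by (auto intro!: prod_nonneg)
qed

lemma bern:
  fixes s a :: real
  assumes "s \<ge> 0" "a \<ge> 0"
  shows "s ^ Suc m + real (Suc m) * a * s ^ m \<le> (s + a) ^ Suc m"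
proof (induction m)
  case 0 then show ?case by simp
next
  case (Suc m)
  have "(s + a) ^ Suc (Suc m) = (s + a) * (s + a) ^ Suc m" by simp
  also have "\<dots> \<ge> (s + a) * (s ^ Suc m + real (Suc m) * a * s ^ m)"
    using Suc assms by (intro mult_left_mono) auto
  finally have 1: "(s + a) * (s ^ Suc m + real (Suc m) * a * s ^ m) \<le> (s + a) ^ Suc (Suc m)" .
  have "(s + a) * (s ^ Suc m + real (Suc m) * a * s ^ m) =
        s ^ Suc (Suc m) + real (Suc (Suc m)) * a * s ^ Suc m + real (Suc m) * a * a * s ^ m"
    by (simp add: algebra_simps)
  moreover have "real (Suc m) * a * a * s ^ m \<ge> 0" using assms by simp
  ultimately show ?case using 1 by linarith
qed

definition c2 :: "nat \<Rightarrow> real" where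
  "c2 k = real k * (real k - 1) / 2"

lemma taylor2:
  fixes s a :: real
  assumes "s \<ge> 0" "a \<ge> 0"
  shows "(s + a) ^ Suc (Suc n) \<le> s ^ Suc (Suc n) + real (Suc (Suc n)) * a * s ^ Suc n + c2 (Suc (Suc n)) * a\<^sup>2 * (s + a) ^ n"
proof (induction n)
  case 0 then show ?case by (simp add: c2_def power2_eq_square algebra_simps)
next
  case (Suc n)
  have "(s + a) ^ Suc (Suc (Suc n)) = (s + a) * (s + a) ^ Suc (Suc n)" by simp
  also have "\<dots> \<le> (s + a) * (s ^ Suc (Suc n) + real (Suc (Suc n)) * a * s ^ Suc n + c2 (Suc (Suc n)) * a\<^sup>2 * (s + a) ^ n)"
    using Suc assms by (intro mult_left_mono) auto
  also have "\<dots> = s ^ Suc (Suc (Suc n)) + real (Suc (Suc (Suc n))) * a * s ^ Suc (Suc n) + real (Suc (Suc n)) * a\<^sup>2 * s ^ Suc n + c2 (Suc (Suc n)) * a\<^sup>2 * (s + a) ^ Suc n"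
    by (simp add: algebra_simps power2_eq_square)
  also have "\<dots> \<le> s ^ Suc (Suc (Suc n)) + real (Suc (Suc (Suc n))) * a * s ^ Suc (Suc n) + real (Suc (Suc n)) * a\<^sup>2 * (s + a) ^ Suc n + c2 (Suc (Suc n)) * a\<^sup>2 * (s + a) ^ Suc n"
  proof -
    have "s ^ Suc n \<le> (s + a) ^ Suc n" using assms by (intro power_mono) auto
    then have "real (Suc (Suc n)) * a\<^sup>2 * s ^ Suc n \<le> real (Suc (Suc n)) * a\<^sup>2 * (s + a) ^ Suc n"
      by (intro mult_left_mono) auto
    then show ?thesis by simp
  qed
  also have "\<dots> = s ^ Suc (Suc (Suc n)) + real (Suc (Suc (Suc n))) * a * s ^ Suc (Suc n) + c2 (Suc (Suc (Suc n))) * a\<^sup>2 * (s + a) ^ Suc n"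
    by (simp add: c2_def field_simps)
  finally show ?case .
qed



lemma esym_upper:
  assumes "finite S" "\<And>p. p \<in> S \<Longrightarrow> a p \<ge> 0"
  shows "fact k * esym a S k \<le> (sum a S) ^ k"
  using assms
proof (induction S arbitrary: k rule: finite_induct)
  case empty
  then show ?case by (cases k) (auto simp: esym_empty)
next
  case (insert q S)
  have aq: "a q \<ge> 0" using insert by simp
  have s0: "sum a S \<ge> 0" using insert by (intro sum_nonneg) auto
  show ?case
  proof (cases k)
    case 0 then show ?thesis using insert by (simp add: esym_0)
  next
    case (Suc j)
    have IH1: "fact (Suc j) * esym a S (Suc j) \<le> (sum a S) ^ Suc j" by (rule insert.IH) (use insert.prems in auto)
    have IH2: "fact j * esym a S j \<le> (sum a S) ^ j" by (rule insert.IH) (use insert.prems in auto)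
    have "fact (Suc j) * esym a (insert q S) (Suc j) = fact (Suc j) * esym a S (Suc j) + real (Suc j) * a q * (fact j * esym a S j)"
      using insert by (simp add: esym_insert algebra_simps)
    also have "\<dots> \<le> (sum a S) ^ Suc j + real (Suc j) * a q * (sum a S) ^ j"
      using IH1 IH2 aq by (intro add_mono mult_left_mono) auto
    also have "\<dots> \<le> (sum a S + a q) ^ Suc j" by (rule bern[OF s0 aq])
    also have "sum a S + a q = sum a (insert q S)" using insert by simp
    finally show ?thesis using Suc by simp
  qed
qed

definition LB :: "real \<Rightarrow> real \<Rightarrow> nat \<Rightarrow> real" where
  "LB s s2 k = s ^ k - c2 k * s2 * s ^ (k - 2)"

lemma LB_step:
  fixes s a s2 :: real
  assumes "s \<ge> 0" "a \<ge> 0" "s2 \<ge> 0"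
  shows "LB (s + a) (s2 + a\<^sup>2) (Suc j) \<le> LB s s2 (Suc j) + real (Suc j) * a * LB s s2 j"
proof (cases j)
  case 0 then show ?thesis by (simp add: LB_def c2_def)
next
  case (Suc i)
  show ?thesis
  proof (cases i)
    case 0
    then show ?thesis using Suc by (simp add: LB_def c2_def power2_eq_square algebra_simps)
  next
    case (Suc m)
    then have j: "j = Suc (Suc m)" using \<open>j = Suc i\<close> by simp
    have T: "(s + a) ^ Suc (Suc (Suc m)) \<le> s ^ Suc (Suc (Suc m)) + real (Suc (Suc (Suc m))) * a * s ^ Suc (Suc m) + c2 (Suc (Suc (Suc m))) * a\<^sup>2 * (s + a) ^ Suc m"
      by (rule taylor2[OF assms(1,2)])
    have B: "s ^ Suc m + real (Suc m) * a * s ^ m \<le> (s + a) ^ Suc m"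
      by (rule bern[OF assms(1,2)])
    have c0: "c2 (Suc (Suc (Suc m))) * s2 \<ge> 0" using assms by (simp add: c2_def)
    have cc: "real (Suc (Suc (Suc m))) * c2 (Suc (Suc m)) = c2 (Suc (Suc (Suc m))) * real (Suc m)" by (simp add: c2_def field_simps)
    have e1: "LB (s + a) (s2 + a\<^sup>2) (Suc j) = (s + a) ^ Suc (Suc (Suc m)) - c2 (Suc (Suc (Suc m))) * (s2 + a\<^sup>2) * (s + a) ^ Suc m"
      unfolding LB_def j by simp
    have e2: "LB s s2 (Suc j) + real (Suc j) * a * LB s s2 j = s ^ Suc (Suc (Suc m)) + real (Suc (Suc (Suc m))) * a * s ^ Suc (Suc m)
        - c2 (Suc (Suc (Suc m))) * s2 * s ^ Suc m - (real (Suc (Suc (Suc m))) * c2 (Suc (Suc m))) * a * s2 * s ^ m"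
      unfolding LB_def j by (simp add: algebra_simps)
    have m1: "c2 (Suc (Suc (Suc m))) * s2 * (s ^ Suc m + real (Suc m) * a * s ^ m) \<le> c2 (Suc (Suc (Suc m))) * s2 * (s + a) ^ Suc m"
      using mult_left_mono[OF B c0] .
    have "(real (Suc (Suc (Suc m))) * c2 (Suc (Suc m))) * a * s2 * s ^ m = c2 (Suc (Suc (Suc m))) * s2 * (real (Suc m) * a * s ^ m)"
      unfolding cc by (simp add: algebra_simps)
    then have e3: "c2 (Suc (Suc (Suc m))) * s2 * s ^ Suc m + (real (Suc (Suc (Suc m))) * c2 (Suc (Suc m))) * a * s2 * s ^ m
       = c2 (Suc (Suc (Suc m))) * s2 * (s ^ Suc m + real (Suc m) * a * s ^ m)"
      by (simp add: algebra_simps)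
    have e4: "c2 (Suc (Suc (Suc m))) * (s2 + a\<^sup>2) * (s + a) ^ Suc m = c2 (Suc (Suc (Suc m))) * s2 * (s + a) ^ Suc m + c2 (Suc (Suc (Suc m))) * a\<^sup>2 * (s + a) ^ Suc m"
      by (simp add: algebra_simps)
    show ?thesis unfolding e1 e2 using T m1 e3 e4 by linarith
  qed
qed

lemma esym_lower:
  assumes "finite S" "\<And>p. p \<in> S \<Longrightarrow> a p \<ge> 0"
  shows "fact k * esym a S k \<ge> LB (sum a S) (\<Sum>p\<in>S. (a p)\<^sup>2) k"
  using assms
proof (induction S arbitrary: k rule: finite_induct)
  case empty
  then show ?case by (cases k) (auto simp: esym_empty LB_def c2_def)
next
  case (insert q S)
  have aq: "a q \<ge> 0" using insert by simp
  have s0: "sum a S \<ge> 0" using insert by (intro sum_nonneg) auto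
  have s20: "(\<Sum>p\<in>S. (a p)\<^sup>2) \<ge> 0" by (intro sum_nonneg) auto
  show ?case
  proof (cases k)
    case 0 then show ?thesis using insert by (simp add: esym_0 LB_def c2_def)
  next
    case (Suc j)
    let ?s = "sum a S" and ?s2 = "\<Sum>p\<in>S. (a p)\<^sup>2"
    have IH1: "fact (Suc j) * esym a S (Suc j) \<ge> LB ?s ?s2 (Suc j)" by (rule insert.IH) (use insert.prems in auto)
    have IH2: "fact j * esym a S j \<ge> LB ?s ?s2 j" by (rule insert.IH) (use insert.prems in auto)
    have "LB (sum a (insert q S)) (\<Sum>p\<in>insert q S. (a p)\<^sup>2) (Suc j) = LB (?s + a q) (?s2 + (a q)\<^sup>2) (Suc j)"
      using insert by (simp add: add.commute)
    also have "\<dots> \<le> LB ?s ?s2 (Suc j) + real (Suc j) * a q * LB ?s ?s2 j"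
      by (rule LB_step[OF s0 aq s20])
    also have "\<dots> \<le> fact (Suc j) * esym a S (Suc j) + real (Suc j) * a q * (fact j * esym a S j)"
      using IH1 IH2 aq by (intro add_mono mult_left_mono) auto
    also have "\<dots> = fact (Suc j) * esym a (insert q S) (Suc j)"
      using insert by (simp add: esym_insert algebra_simps)
    finally show ?thesis using Suc by simp
  qed
qed



lemma ln_lower_pade:
  fixes x :: real
  assumes "x \<ge> 0"
  shows "2 * x / (2 + x) \<le> ln (1 + x)"
proof -
  let ?f = "\<lambda>x::real. ln (1 + x) - 2 * x / (2 + x)"
  have "?f 0 \<le> ?f x"
  proof (rule DERIV_nonneg_imp_nondecreasing[OF assms])
    fix u :: real assume u: "0 \<le> u" "u \<le> x"
    have d1: "((\<lambda>x. ln (1 + x)) has_real_derivative 1 / (1 + u)) (at u)"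
      using u by (auto intro!: derivative_eq_intros)
    have d2: "((\<lambda>x. 2 * x / (2 + x)) has_real_derivative 4 / (2 + u)\<^sup>2) (at u)"
    proof -
      have "((\<lambda>x. 2 * x / (2 + x)) has_real_derivative (2 * (2 + u) - 2 * u * 1) / ((2 + u) * (2 + u))) (at u)"
        using u by (intro derivative_eq_intros DERIV_divide) auto
      moreover have "(2 * (2 + u) - 2 * u * 1) / ((2 + u) * (2 + u)) = 4 / (2 + u)\<^sup>2"
        by (simp add: power2_eq_square algebra_simps)
      ultimately show ?thesis by simp
    qed
    have "(?f has_real_derivative (1 / (1 + u) - 4 / (2 + u)\<^sup>2)) (at u)"
      using DERIV_diff[OF d1 d2] .
    moreover have "0 \<le> 1 / (1 + u) - 4 / (2 + u)\<^sup>2"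
    proof -
      have p: "(2 + u)\<^sup>2 > 0" "1 + u > 0" using u by auto
      have "4 * (1 + u) \<le> 1 * (2 + u)\<^sup>2" by (simp add: power2_eq_square algebra_simps)
      then have "4 / (2 + u)\<^sup>2 \<le> 1 / (1 + u)" using p by (simp add: divide_simps)
      then show ?thesis by simp
    qed
    ultimately show "\<exists>y. (?f has_real_derivative y) (at u) \<and> 0 \<le> y" by blast
  qed
  then show ?thesis by simp
qed

lemma ln_upper_cubic:
  fixes x :: real
  assumes "x \<ge> 0"
  shows "ln (1 + x) \<le> x - x\<^sup>2 / 2 + x ^ 3 / 3"
proof -
  let ?f = "\<lambda>x::real. x - x\<^sup>2 / 2 + x ^ 3 / 3 - ln (1 + x)"
  have "?f 0 \<le> ?f x"
  proof (rule DERIV_nonneg_imp_nondecreasing[OF assms])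
    fix u :: real assume u: "0 \<le> u" "u \<le> x"
    have "(?f has_real_derivative (1 - u + u\<^sup>2 - 1 / (1 + u))) (at u)"
      using u by (auto intro!: derivative_eq_intros simp: field_simps power2_eq_square)
    moreover have "0 \<le> 1 - u + u\<^sup>2 - 1 / (1 + u)"
    proof -
      have "1 - u + u\<^sup>2 - 1 / (1 + u) = u ^ 3 / (1 + u)"
        using u by (simp add: field_simps power2_eq_square power3_eq_cube)
      also have "\<dots> \<ge> 0" using u by simp
      finally show ?thesis .
    qed
    ultimately show "\<exists>y. (?f has_real_derivative y) (at u) \<and> 0 \<le> y" by blast
  qed
  then show ?thesis by simp
qed

lemma ln_lower_quad:
  fixes x :: real
  assumes "x \<ge> 0"
  shows "x - x\<^sup>2 / 2 \<le> ln (1 + x)"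
proof -
  have "x - x\<^sup>2 / 2 \<le> 2 * x / (2 + x)"
  proof -
    have "2 * x / (2 + x) - (x - x\<^sup>2 / 2) = x ^ 3 / (2 * (2 + x))"
      using assms by (simp add: field_simps power2_eq_square power3_eq_cube)
    also have "\<dots> \<ge> 0" using assms by simp
    finally show ?thesis by simp
  qed
  also have "\<dots> \<le> ln (1 + x)" by (rule ln_lower_pade[OF assms])
  finally show ?thesis .
qed

definition Lst :: "nat \<Rightarrow> real" where
  "Lst k = ln (fact k) - (real k + 1 / 2) * ln (real k) + real k"

lemma Lst_step:
  assumes "k \<ge> 1"
  shows "Lst (Suc k) - Lst k = 1 - (real k + 1 / 2) * ln (1 + 1 / real k)"
proof -
  have k0: "real k > 0" using assms by simp
  have L: "ln (1 + 1 / real k) = ln (real (Suc k)) - ln (real k)"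
  proof -
    have "1 + 1 / real k = real (Suc k) / real k" using k0 by (simp add: field_simps)
    then show ?thesis using k0 by (simp add: ln_div)
  qed
  have F: "ln (fact (Suc k) :: real) = ln (real (Suc k)) + ln (fact k)"
    by (simp add: ln_mult)
  show ?thesis unfolding Lst_def F L by (simp add: algebra_simps)
qed

lemma Lst_step_bounds:
  assumes "k \<ge> 1"
  shows "Lst (Suc k) - Lst k \<le> 0"
    and "Lst (Suc k) - Lst k \<ge> 1 / (2 * real (Suc k)) - 1 / (2 * real k)"
proof -
  have k0: "real k \<ge> 1" using assms by simp
  define x where "x = 1 / real k"
  have x0: "x > 0" "x \<le> 1" unfolding x_def using k0 by auto
  have kx: "real k * x = 1" unfolding x_def using k0 by simp
  have "(real k + 1 / 2) * ln (1 + x) \<ge> (real k + 1 / 2) * (2 * x / (2 + x))"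
    using ln_lower_pade[of x] x0 k0 by (intro mult_left_mono) auto
  also have "(real k + 1 / 2) * (2 * x / (2 + x)) = 1"
    unfolding x_def using k0 by (simp add: field_simps)
  finally have a: "(real k + 1 / 2) * ln (1 + x) \<ge> 1" .
  then show "Lst (Suc k) - Lst k \<le> 0" using Lst_step[OF assms] unfolding x_def by simp
  have "(real k + 1 / 2) * ln (1 + x) \<le> (real k + 1 / 2) * (x - x\<^sup>2 / 2 + x ^ 3 / 3)"
    using ln_upper_cubic[of x] x0 k0 by (intro mult_left_mono) auto
  also have "(real k + 1 / 2) * (x - x\<^sup>2 / 2 + x ^ 3 / 3) = 1 + x\<^sup>2 / 12 + x ^ 3 / 6"
    unfolding x_def using k0 by (simp add: field_simps power2_eq_square power3_eq_cube)
  also have "\<dots> \<le> 1 + x\<^sup>2 / (2 * (1 + x))"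
  proof -
    have "(1 / 12 + x / 6) * (1 + x) \<le> 1 / 2" using x0
    proof -
      have "(1 / 12 + x / 6) * (1 + x) \<le> (1 / 12 + 1 / 6) * (1 + 1)"
        using x0 by (intro mult_mono) auto
      then show ?thesis by simp
    qed
    then have "x\<^sup>2 * ((1 / 12 + x / 6) * (1 + x)) \<le> x\<^sup>2 * (1 / 2)" by (intro mult_left_mono) auto
    then have "x\<^sup>2 / 12 + x ^ 3 / 6 \<le> x\<^sup>2 / (2 * (1 + x))" using x0
      by (simp add: field_simps power2_eq_square power3_eq_cube)
    then show ?thesis by simp
  qed
  also have "x\<^sup>2 / (2 * (1 + x)) = 1 / (2 * real k) - 1 / (2 * real (Suc k))"
    unfolding x_def using k0 by (simp add: field_simps power2_eq_square)
  finally show "Lst (Suc k) - Lst k \<ge> 1 / (2 * real (Suc k)) - 1 / (2 * real k)"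
    using Lst_step[OF assms] unfolding x_def by simp
qed

lemma Lst_bounds:
  assumes "k \<ge> 1"
  shows "Lst k \<le> 1" "Lst k \<ge> 1 / 2 + 1 / (2 * real k)"
proof -
  have L1: "Lst 1 = 1" by (simp add: Lst_def)
  show "Lst k \<le> 1" using assms
  proof (induction k rule: dec_induct)
    case base then show ?case using L1 by simp
  next
    case (step n) then show ?case using Lst_step_bounds(1)[of n] by simp
  qed
  show "Lst k \<ge> 1 / 2 + 1 / (2 * real k)" using assms
  proof (induction k rule: dec_induct)
    case base then show ?case using L1 by simp
  next
    case (step n) then show ?case using Lst_step_bounds(2)[of n] by simp
  qed
qed

lemma stirling_bounds:
  assumes "k \<ge> 1"
  shows "(real k + 1 / 2) * ln (real k) - real k + 1 / 2 \<le> ln (fact k)"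
    and "ln (fact k) \<le> (real k + 1 / 2) * ln (real k) - real k + 1"
proof -
  have "Lst k \<ge> 1 / 2" using Lst_bounds(2)[OF assms] assms by (smt (verit) divide_nonneg_nonneg of_nat_0_le_iff)
  then show "(real k + 1 / 2) * ln (real k) - real k + 1 / 2 \<le> ln (fact k)" unfolding Lst_def by simp
  show "ln (fact k) \<le> (real k + 1 / 2) * ln (real k) - real k + 1" using Lst_bounds(1)[OF assms] unfolding Lst_def by simp
qed



lemma inv_sq_tele:
  fixes z N :: nat
  assumes "z \<ge> 2" "z - 1 \<le> N"
  shows "(\<Sum>n\<in>{z..N}. 1 / (real n)\<^sup>2) \<le> 1 / (real z - 1) - 1 / real N"
  using assms(2)
proof (induction N rule: dec_induct)
  case base
  have "{z..z-1} = {}" using assms by auto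
  then show ?case using assms by (simp add: of_nat_diff)
next
  case (step N)
  have N1: "real N \<ge> 1" using step assms by simp
  have "(\<Sum>n\<in>{z..Suc N}. 1 / (real n)\<^sup>2) = (\<Sum>n\<in>{z..N}. 1 / (real n)\<^sup>2) + 1 / (real (Suc N))\<^sup>2"
    using step assms by (subst sum.cl_ivl_Suc) auto
  also have "\<dots> \<le> 1 / (real z - 1) - 1 / real N + 1 / (real (Suc N))\<^sup>2" using step by simp
  also have "1 / (real (Suc N))\<^sup>2 \<le> 1 / real N - 1 / real (Suc N)"
  proof -
    have "1 / real N - 1 / real (Suc N) = 1 / (real N * real (Suc N))" using N1 by (simp add: field_simps)
    also have "\<dots> \<ge> 1 / (real (Suc N))\<^sup>2" using N1
      by (intro divide_left_mono) (auto simp: power2_eq_square intro!: mult_mono)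
    finally show ?thesis .
  qed
  finally show ?case by simp
qed

lemma sum_inv_sq:
  fixes T :: "nat set" and z :: nat
  assumes "finite T" "\<And>p. p \<in> T \<Longrightarrow> p \<ge> z" "z \<ge> 2"
  shows "(\<Sum>p\<in>T. (1 / real p)\<^sup>2) \<le> 1 / (real z - 1)"
proof -
  obtain N where N: "T \<subseteq> {..N}" using assms(1) finite_nat_iff_bounded_le by auto
  define M where "M = max N z"
  have TM: "T \<subseteq> {z..M}" using N assms(2) unfolding M_def by force
  have "(\<Sum>p\<in>T. (1 / real p)\<^sup>2) \<le> (\<Sum>p\<in>{z..M}. (1 / real p)\<^sup>2)"
    by (rule sum_mono2[OF _ TM]) auto
  also have "\<dots> = (\<Sum>p\<in>{z..M}. 1 / (real p)\<^sup>2)" by (simp add: power_divide)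
  also have "\<dots> \<le> 1 / (real z - 1) - 1 / real M" by (rule inv_sq_tele) (use assms in \<open>auto simp: M_def\<close>)
  also have "\<dots> \<le> 1 / (real z - 1)" by simp
  finally show ?thesis .
qed

lemma prod_ratio_bounds:
  fixes S :: "nat set"
  assumes "finite S" "\<And>p. p \<in> S \<Longrightarrow> p \<ge> 1"
  shows "exp (- (\<Sum>p\<in>S. 1 / real p)) \<le> (\<Prod>p\<in>S. real p / (real p + 1))"
    and "(\<Prod>p\<in>S. real p / (real p + 1)) \<le> exp (- (\<Sum>p\<in>S. 1 / real p) + (\<Sum>p\<in>S. (1 / real p)\<^sup>2) / 2)"
proof -
  have e: "(\<Prod>p\<in>S. real p / (real p + 1)) = exp (- (\<Sum>p\<in>S. ln (1 + 1 / real p)))"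
  proof -
    have "(\<Prod>p\<in>S. real p / (real p + 1)) = (\<Prod>p\<in>S. exp (- ln (1 + 1 / real p)))"
    proof (rule prod.cong[OF refl])
      fix p assume "p \<in> S"
      then have p1: "real p \<ge> 1" using assms by simp
      have "1 / real p \<ge> 0" by simp
      then have pp: "1 + 1 / real p > 0" by linarith
      have "exp (- ln (1 + 1 / real p)) = 1 / (1 + 1 / real p)" using pp
        by (simp add: exp_minus inverse_eq_divide)
      also have "\<dots> = real p / (real p + 1)" using p1 by (simp add: field_simps)
      finally show "real p / (real p + 1) = exp (- ln (1 + 1 / real p))" by simp
    qed
    also have "\<dots> = exp (\<Sum>p\<in>S. - ln (1 + 1 / real p))" by (rule exp_sum[symmetric]) (use assms in simp)
    finally show ?thesis by (simp add: sum_negf)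
  qed
  have "(\<Sum>p\<in>S. ln (1 + 1 / real p)) \<le> (\<Sum>p\<in>S. 1 / real p)"
    by (intro sum_mono ln_add_one_self_le_self) simp
  then show "exp (- (\<Sum>p\<in>S. 1 / real p)) \<le> (\<Prod>p\<in>S. real p / (real p + 1))" unfolding e by simp
  have "(\<Sum>p\<in>S. 1 / real p - (1 / real p)\<^sup>2 / 2) \<le> (\<Sum>p\<in>S. ln (1 + 1 / real p))"
    by (intro sum_mono ln_lower_quad) simp
  then have "- (\<Sum>p\<in>S. ln (1 + 1 / real p)) \<le> - (\<Sum>p\<in>S. 1 / real p) + (\<Sum>p\<in>S. (1 / real p)\<^sup>2) / 2"
    by (simp add: sum_subtractf sum_divide_distrib)
  then show "(\<Prod>p\<in>S. real p / (real p + 1)) \<le> exp (- (\<Sum>p\<in>S. 1 / real p) + (\<Sum>p\<in>S. (1 / real p)\<^sup>2) / 2)"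
    unfolding e by simp
qed

lemma Q_identity:
  fixes k :: nat and lam :: real
  assumes "k \<ge> 1" "lam > 0"
  shows "lam * Q (real k / lam) = real k * ln (real k) - real k * ln lam - real k + lam"
proof -
  have L: "ln (real k / lam) = ln (real k) - ln lam" using assms by (simp add: ln_div)
  show ?thesis unfolding Q_def L using assms by (simp add: field_simps)
qed

lemma sqrt_exp: "real k \<ge> 1 \<Longrightarrow> sqrt (real k) = exp (ln (real k) / 2)"
proof -
  assume k: "real k \<ge> 1"
  have "exp (ln (real k) / 2) = exp (ln (real k) * (1/2))" by simp
  also have "\<dots> = real k powr (1/2)" using k by (simp add: powr_def)
  also have "\<dots> = sqrt (real k)" using k by (simp add: powr_half_sqrt)
  finally show ?thesis by simp
qed

lemma exp3: "exp (a::real) * (exp b / exp c) = exp (a + b - c)"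
  by (simp add: exp_add exp_diff)

lemma upper_core:
  fixes k :: nat and lam s P C :: real
  assumes k: "k \<ge> 1" and lam: "lam > 0" and s: "s \<ge> 0" and C: "\<bar>s - lam\<bar> \<le> C"
    and t: "real k \<le> 10 * lam"
    and P: "P \<le> exp (- s + 1 / 2) * s ^ k / fact k"
  shows "P \<le> exp (9 * C) * (exp (- lam * Q (real k / lam)) / sqrt (real k))"
proof (cases "s = 0")
  case True
  obtain j where j: "k = Suc j" using k by (cases k) auto
  have "P \<le> 0" using P True unfolding j by simp
  moreover have "0 \<le> exp (9 * C) * (exp (- lam * Q (real k / lam)) / sqrt (real k))" by simp
  ultimately show ?thesis by linarith
next
  case False
  then have s0: "s > 0" using s by simp
  have k1: "real k \<ge> 1" using k by simp
  have R: "exp (- s + 1 / 2) * s ^ k / fact k = exp (- s + 1 / 2 + real k * ln s - ln (fact k))"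
  proof -
    have "s ^ k = exp (real k * ln s)" using s0 by (simp add: exp_of_nat_mult)
    moreover have "(fact k :: real) = exp (ln (fact k))" by simp
    ultimately show ?thesis by (simp add: exp_add exp_diff)
  qed
  have RHS: "exp (9 * C) * (exp (- lam * Q (real k / lam)) / sqrt (real k))
      = exp (9 * C - (real k * ln (real k) - real k * ln lam - real k + lam) - ln (real k) / 2)"
  proof -
    have "exp (9 * C) * (exp (- lam * Q (real k / lam)) / sqrt (real k)) = exp (9 * C + (- lam * Q (real k / lam)) - ln (real k) / 2)"
      unfolding sqrt_exp[OF k1] by (rule exp3)
    moreover have "- lam * Q (real k / lam) = - (real k * ln (real k) - real k * ln lam - real k + lam)"
      using Q_identity[OF k lam] by simp
    ultimately show ?thesis by simp
  qed
  have st: "ln (fact k) \<ge> (real k + 1 / 2) * ln (real k) - real k + 1 / 2" by (rule stirling_bounds(1)[OF k])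
  have cv: "ln s \<le> ln lam + (s - lam) / lam"
  proof -
    have "ln s - ln lam = ln (s / lam)" using s0 lam by (simp add: ln_div)
    also have "\<dots> \<le> s / lam - 1" using s0 lam by (intro ln_le_minus_one) simp
    also have "\<dots> = (s - lam) / lam" using lam by (simp add: field_simps)
    finally show ?thesis by simp
  qed
  have "real k * ln s \<le> real k * ln lam + real k * ((s - lam) / lam)"
    using mult_left_mono[OF cv, of "real k"] by (simp add: algebra_simps)
  moreover have "real k * ((s - lam) / lam) - s \<le> - lam + 9 * C"
  proof -
    define t where "t = real k / lam"
    have t0: "0 < t" "t \<le> 10" unfolding t_def using k1 lam t by (auto simp: field_simps)
    have "real k * ((s - lam) / lam) - s = - lam + (t - 1) * (s - lam)" unfolding t_def using lam by (simp add: field_simps)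
    moreover have "(t - 1) * (s - lam) \<le> \<bar>t - 1\<bar> * \<bar>s - lam\<bar>" by (metis abs_ge_self abs_mult)
    moreover have "\<bar>t - 1\<bar> * \<bar>s - lam\<bar> \<le> 9 * C"
    proof -
      have "\<bar>t - 1\<bar> \<le> 9" using t0 by simp
      then show ?thesis using C by (intro mult_mono) auto
    qed
    ultimately show ?thesis by linarith
  qed
  ultimately have "- s + 1 / 2 + real k * ln s - ln (fact k) \<le> 9 * C - (real k * ln (real k) - real k * ln lam - real k + lam) - ln (real k) / 2"
    using st by (simp add: algebra_simps)
  then have "exp (- s + 1 / 2) * s ^ k / fact k \<le> exp (9 * C) * (exp (- lam * Q (real k / lam)) / sqrt (real k))"
    unfolding R RHS by simp
  then show ?thesis using P by linarith
qed

lemma lower_core: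
  fixes k :: nat and lam s D P C :: real
  assumes k: "k \<ge> 1" and lam: "lam > 0" and s: "s > 0" and C: "\<bar>s - lam\<bar> \<le> C"
    and t: "real k \<le> 20 * s"
    and P: "P \<ge> exp (- (s + D)) * s ^ k / (2 * fact k)"
  shows "P \<ge> exp (- (D + 21 * C + ln 2 + 1)) * (exp (- lam * Q (real k / lam)) / sqrt (real k))"
proof -
  have k1: "real k \<ge> 1" using k by simp
  have R: "exp (- (s + D)) * s ^ k / (2 * fact k) = exp (- (s + D) + real k * ln s - ln 2 - ln (fact k))"
  proof -
    have "s ^ k = exp (real k * ln s)" using s by (simp add: exp_of_nat_mult)
    moreover have "(fact k :: real) = exp (ln (fact k))" by simp
    moreover have "(2::real) = exp (ln 2)" by simp
    ultimately show ?thesis by (simp add: exp_add exp_diff)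
  qed
  have RHS: "exp (- (D + 21 * C + ln 2 + 1)) * (exp (- lam * Q (real k / lam)) / sqrt (real k))
      = exp (- (D + 21 * C + ln 2 + 1) - (real k * ln (real k) - real k * ln lam - real k + lam) - ln (real k) / 2)"
  proof -
    have "exp (- (D + 21 * C + ln 2 + 1)) * (exp (- lam * Q (real k / lam)) / sqrt (real k)) = exp (- (D + 21 * C + ln 2 + 1) + (- lam * Q (real k / lam)) - ln (real k) / 2)"
      unfolding sqrt_exp[OF k1] by (rule exp3)
    moreover have "- lam * Q (real k / lam) = - (real k * ln (real k) - real k * ln lam - real k + lam)"
      using Q_identity[OF k lam] by simp
    ultimately show ?thesis by simp
  qed
  have st: "ln (fact k) \<le> (real k + 1 / 2) * ln (real k) - real k + 1" by (rule stirling_bounds(2)[OF k])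
  have cv: "ln lam \<le> ln s + (lam - s) / s"
  proof -
    have "ln lam - ln s = ln (lam / s)" using s lam by (simp add: ln_div)
    also have "\<dots> \<le> lam / s - 1" using s lam by (intro ln_le_minus_one) simp
    also have "\<dots> = (lam - s) / s" using s by (simp add: field_simps)
    finally show ?thesis by simp
  qed
  have "real k * ln lam \<le> real k * ln s + real k * ((lam - s) / s)"
    using mult_left_mono[OF cv, of "real k"] by (simp add: algebra_simps)
  moreover have "- s - real k * ((lam - s) / s) \<ge> - lam - 21 * C"
  proof -
    define u where "u = real k / s"
    have u0: "0 < u" "u \<le> 20" unfolding u_def using k1 s t by (auto simp: field_simps)
    have e: "- s - real k * ((lam - s) / s) = - lam - (u - 1) * (lam - s)" unfolding u_def using s by (simp add: field_simps)
    have "(u - 1) * (lam - s) \<le> \<bar>u - 1\<bar> * \<bar>lam - s\<bar>" by (metis abs_ge_self abs_mult)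
    moreover have "\<bar>u - 1\<bar> * \<bar>lam - s\<bar> \<le> 21 * C"
    proof -
      have "\<bar>u - 1\<bar> \<le> 21" using u0 by simp
      moreover have "\<bar>lam - s\<bar> \<le> C" using C by simp
      ultimately show ?thesis by (intro mult_mono) auto
    qed
    ultimately have "(u - 1) * (lam - s) \<le> 21 * C" by linarith
    then show ?thesis unfolding e by linarith
  qed
  ultimately have "- (D + 21 * C + ln 2 + 1) - (real k * ln (real k) - real k * ln lam - real k + lam) - ln (real k) / 2
      \<le> - (s + D) + real k * ln s - ln 2 - ln (fact k)"
    using st by (simp add: algebra_simps)
  then have "exp (- (D + 21 * C + ln 2 + 1)) * (exp (- lam * Q (real k / lam)) / sqrt (real k)) \<le> exp (- (s + D)) * s ^ k / (2 * fact k)"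
    unfolding R RHS by simp
  then show ?thesis using P by linarith
qed




lemma e_le_ln100: "exp 1 \<le> ln (100::real)"
proof -
  have "exp 1 < (272 / 100 :: real)" by (rule e_less_272)
  then have e3: "exp 1 \<le> (3::real)" by simp
  have "exp (3::real) = exp (real 3 * 1)" by simp
  also have "\<dots> = exp 1 ^ 3" by (rule exp_of_nat_mult)
  finally have "exp (3::real) = exp 1 ^ 3" .
  also have "\<dots> \<le> 3 ^ 3" using e3 by (intro power_mono) auto
  also have "\<dots> \<le> 100" by simp
  finally have "exp (3::real) \<le> 100" .
  then have "ln (exp (3::real)) \<le> ln 100" by (subst ln_le_cancel_iff) auto
  then have "3 \<le> ln (100::real)" by simp
  then show ?thesis using e3 by simp
qed

lemma Log2_eq:
  fixes u :: real
  assumes "u \<ge> 100"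
  shows "Log2 u = ln (ln u)" "ln u \<ge> exp 1"
proof -
  have "ln u \<ge> ln 100" using assms by simp
  then show lu: "ln u \<ge> exp 1" using e_le_ln100 by simp
  have "exp 1 \<ge> (1::real)" by simp
  then have l1: "ln u \<ge> 1" using lu by linarith
  have lp: "0 < ln u" using lu exp_gt_zero[of 1] by linarith
  have "ln (ln u) \<ge> ln (exp 1)" using lu lp by (subst ln_le_cancel_iff) auto
  then have "ln (ln u) \<ge> 1" by simp
  then show "Log2 u = ln (ln u)" unfolding Log2_def LogM_def using l1 by simp
qed

lemma LogM_ge1: "LogM u \<ge> 1" unfolding LogM_def by simp
lemma Log2_ge1: "Log2 u \<ge> 1" unfolding Log2_def by (rule LogM_ge1)

lemma LogM_mono: "0 < a \<Longrightarrow> a \<le> b \<Longrightarrow> LogM a \<le> LogM b"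
proof -
  assume "0 < a" "a \<le> b"
  then have "ln a \<le> ln b" by simp
  then show ?thesis unfolding LogM_def by (rule max.mono[OF order_refl])
qed

lemma Log2_mono: "0 < a \<Longrightarrow> a \<le> b \<Longrightarrow> Log2 a \<le> Log2 b"
  unfolding Log2_def using LogM_ge1 by (intro LogM_mono LogM_mono) (auto intro: less_le_trans[OF zero_less_one])

lemma Log2_le_self: "u \<ge> 100 \<Longrightarrow> Log2 u \<le> u"
proof -
  assume u: "u \<ge> 100"
  have lu: "ln u \<ge> 1" using Log2_eq(2)[OF u] by (smt (verit) one_le_exp_iff)
  have "ln (ln u) \<le> ln u - 1" using lu by (intro ln_le_minus_one) simp
  also have "ln u \<le> u - 1" using u by (intro ln_le_minus_one) simp
  finally show ?thesis using Log2_eq(1)[OF u] by simp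
qed

lemma primes_in_split:
  assumes "y \<le> m" "m \<le> x"
  shows "rsum y x = rsum y m + rsum m x"
proof -
  have "primes_in y x = primes_in y m \<union> primes_in m x" unfolding primes_in_def using assms by auto
  moreover have "primes_in y m \<inter> primes_in m x = {}" unfolding primes_in_def by auto
  ultimately show ?thesis unfolding rsum_def by (simp add: sum.union_disjoint)
qed

lemma rsum_nonneg: "rsum y x \<ge> 0" unfolding rsum_def by (intro sum_nonneg) simp

lemma rsum_small:
  assumes "m \<ge> 0"
  shows "rsum y m \<le> m + 1"
proof -
  have sub: "primes_in y m \<subseteq> {..<nat \<lceil>m\<rceil>}"
  proof
    fix p assume "p \<in> primes_in y m"
    then have "real p < m" unfolding primes_in_def by simp
    then have "int p < \<lceil>m\<rceil>" by (simp add: less_ceiling_iff)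
    then show "p \<in> {..<nat \<lceil>m\<rceil>}" by simp
  qed
  have "rsum y m \<le> (\<Sum>p\<in>primes_in y m. 1)" unfolding rsum_def
  proof (rule sum_mono)
    fix p assume "p \<in> primes_in y m"
    then have "real p \<ge> 1" using prime_ge_1_nat[OF primes_in_prime] by simp
    then show "1 / real p \<le> 1" by simp
  qed
  also have "\<dots> = real (card (primes_in y m))" by simp
  also have "\<dots> \<le> real (card {..<nat \<lceil>m\<rceil>})" using card_mono[OF _ sub] by simp
  also have "\<dots> = real (nat \<lceil>m\<rceil>)" by simp
  also have "\<dots> \<le> m + 1"
  proof -
    have c0: "\<lceil>m\<rceil> \<ge> 0" using assms by simp
    have "real (nat \<lceil>m\<rceil>) = real_of_int \<lceil>m\<rceil>" using c0 by simp
    moreover have "real_of_int \<lceil>m\<rceil> - 1 < m" using ceiling_correct[of m] by simp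
    ultimately show ?thesis by linarith
  qed
  finally show ?thesis .
qed

lemma rsum_empty: "rsum y y = 0"
proof -
  have "primes_in y y = {}" unfolding primes_in_def by auto
  then show ?thesis unfolding rsum_def by simp
qed

lemma mertens_Log2:
  fixes x y :: real
  assumes "100 \<le> y" "y \<le> x"
  shows "\<bar>rsum y x - (Log2 x - Log2 y)\<bar> \<le> 24 / ln y"
proof -
  have "Log2 x - Log2 y = ln (ln x) - ln (ln y)" using Log2_eq(1)[of x] Log2_eq(1)[of y] assms by simp
  then show ?thesis using mertens2_real[of y x] assms by simp
qed



lemma ln_ge1_of_100: "(u::real) \<ge> 100 \<Longrightarrow> ln u \<ge> 1"
proof -
  assume u: "u \<ge> 100"
  have "exp 1 \<ge> (1::real)" by simp
  then show ?thesis using Log2_eq(2)[OF u] by linarith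
qed

lemma mert_A:
  assumes "100 \<le> x" "1 \<le> y" "y \<le> x"
  shows "\<bar>rsum y x - (Log2 x - Log2 y)\<bar> \<le> 225"
proof (cases "y \<ge> 100")
  case True
  have "\<bar>rsum y x - (Log2 x - Log2 y)\<bar> \<le> 24 / ln y" using mertens_Log2[OF True assms(3)] .
  also have "\<dots> \<le> 24" using ln_ge1_of_100[OF True] by (simp add: field_simps)
  finally show ?thesis by simp
next
  case False
  have sp: "rsum y x = rsum y 100 + rsum 100 x" using False assms by (intro primes_in_split) auto
  have r1: "0 \<le> rsum y 100" "rsum y 100 \<le> 101" using rsum_nonneg rsum_small[of 100 y] by auto
  have "\<bar>rsum 100 x - (Log2 x - Log2 100)\<bar> \<le> 24 / ln 100" using mertens_Log2[of 100 x] assms by simp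
  also have "\<dots> \<le> 24" using ln_ge1_of_100[of 100] by (simp add: field_simps)
  finally have r2: "\<bar>rsum 100 x - (Log2 x - Log2 100)\<bar> \<le> 24" .
  have l1: "Log2 y \<le> Log2 100" using False assms by (intro Log2_mono) auto
  have l2: "Log2 100 \<le> 100" by (rule Log2_le_self) simp
  have l3: "Log2 y \<ge> 1" by (rule Log2_ge1)
  show ?thesis using sp r1 r2 l1 l2 l3 by (simp add: abs_le_iff)
qed

lemma mert_B:
  assumes "exp 480 \<le> y" "y \<le> x"
  shows "\<bar>rsum y x - (Log2 x - Log2 y)\<bar> \<le> 1 / 20"
proof -
  have "(481::real) \<le> 1 + 480" by simp
  also have "1 + (480::real) \<le> exp 480" by (rule exp_ge_add_one_self)
  finally have y100: "100 \<le> y" using assms by simp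
  have ly: "ln y \<ge> 480" using assms by (metis exp_gt_zero exp_le_cancel_iff exp_ln less_le_trans)
  have "\<bar>rsum y x - (Log2 x - Log2 y)\<bar> \<le> 24 / ln y" using mertens_Log2[OF y100 assms(2)] .
  also have "\<dots> \<le> 24 / 480" using ly by (intro divide_left_mono) auto
  finally show ?thesis by simp
qed

lemma mert_C:
  assumes "401 \<le> x" "1 \<le> y" "y \<le> x"
  shows "\<bar>rsum (max y 401) x - (Log2 x - Log2 y)\<bar> \<le> 425"
    and "0 \<le> rsum y x - rsum (max y 401) x" "rsum y x - rsum (max y 401) x \<le> 402"
proof -
  let ?y = "max y 401"
  have y1: "100 \<le> ?y" "?y \<le> x" using assms by auto
  have "\<bar>rsum ?y x - (Log2 x - Log2 ?y)\<bar> \<le> 24 / ln ?y" using mertens_Log2[OF y1] .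
  also have "\<dots> \<le> 24" using ln_ge1_of_100[OF y1(1)] by (simp add: field_simps)
  finally have r: "\<bar>rsum ?y x - (Log2 x - Log2 ?y)\<bar> \<le> 24" .
  have l1: "Log2 y \<le> Log2 ?y" using assms by (intro Log2_mono) auto
  have l2: "Log2 ?y - Log2 y \<le> 401"
  proof (cases "y \<ge> 401")
    case True then show ?thesis by simp
  next
    case False
    then have "Log2 ?y = Log2 401" by simp
    moreover have "Log2 (401::real) \<le> 401" by (rule Log2_le_self) simp
    ultimately show ?thesis using Log2_ge1[of y] by simp
  qed
  show "\<bar>rsum ?y x - (Log2 x - Log2 y)\<bar> \<le> 425" using r l1 l2 by (simp add: abs_le_iff)
  have sp: "rsum y x = rsum y ?y + rsum ?y x" using assms by (intro primes_in_split) auto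
  show "0 \<le> rsum y x - rsum ?y x" using sp rsum_nonneg[of y ?y] by simp
  have "rsum y ?y \<le> 402"
  proof (cases "y \<ge> 401")
    case True then show ?thesis using rsum_empty[of y] by simp
  next
    case False
    then have "?y = 401" by simp
    then show ?thesis using rsum_small[of 401 y] by simp
  qed
  then show "rsum y x - rsum ?y x \<le> 402" using sp by simp
qed

lemma LB_half:
  fixes s s2 :: real
  assumes "s > 0" "0 \<le> s2" "s2 \<le> 1 / 400" "real k \<le> 20 * s"
  shows "LB s s2 k \<ge> s ^ k / 2"
proof (cases "k \<le> 1")
  case True
  then have "c2 k = 0" unfolding c2_def by (cases k) auto
  then show ?thesis unfolding LB_def using assms by simp
next
  case False
  then obtain m where m: "k = m + 2" by (metis add.commute add_2_eq_Suc' le_add_diff_inverse2 nat_le_linear not_less_eq_eq numeral_2_eq_2 plus_1_eq_Suc)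
  have c2k: "c2 k \<le> real k ^ 2 / 2" unfolding c2_def by (simp add: power2_eq_square field_simps)
  have "real k ^ 2 \<le> (20 * s) ^ 2" using assms by (intro power_mono) auto
  then have "c2 k \<le> 200 * s ^ 2" using c2k by (simp add: power_mult_distrib)
  then have "c2 k * s2 \<le> 200 * s ^ 2 * (1 / 400)"
    using assms by (intro mult_mono) (auto simp: c2_def)
  then have "c2 k * s2 * s ^ m \<le> (s ^ 2 / 2) * s ^ m" using assms by (intro mult_right_mono) auto
  then have "c2 k * s2 * s ^ (k - 2) \<le> s ^ k / 2" using m by (simp add: power_add power2_eq_square mult.assoc)
  then show ?thesis unfolding LB_def by simp
qed



lemma main_bounds:
  fixes x y t :: real and k :: nat
  assumes hx: "exp (exp 2000) \<le> x" and y1: "1 \<le> y" and yx: "y \<le> x" and k1: "1 \<le> k" and t10: "t \<le> 10"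
    and kt: "real k = t * (Log2 x - Log2 y)"
  defines "P \<equiv> measure_pmf.prob (np_model y x) {f. omega (n_interval y x f) = k}"
    and "B \<equiv> exp (- (Log2 x - Log2 y) * Q t) / sqrt (real k)"
  shows "exp (- (402 + 21 * 425 + ln 2 + 1)) * B \<le> P \<and> P \<le> exp (9 * 225) * B"
proof -
  define lam where "lam = Log2 x - Log2 y"
  define S where "S = primes_in y x"
  define a where "a = (\<lambda>p::nat. 1 / real p)"
  have e2000: "(2001::real) \<le> exp 2000" using exp_ge_add_one_self[of 2000] by simp
  have ee: "exp 2000 \<le> exp (exp (2000::real))" using e2000 by simp
  have x401: "401 \<le> x" using hx e2000 ee by linarith
  have x100: "100 \<le> x" using x401 by simp
  have lnx: "exp 2000 \<le> ln x"
  proof -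
    have "ln (exp (exp 2000)) \<le> ln x" using hx x100 by (subst ln_le_cancel_iff) auto
    then show ?thesis by simp
  qed
  have Lx: "Log2 x \<ge> 2000"
  proof -
    have "0 < ln x" using lnx exp_gt_zero[of 2000] by linarith
    then have "ln (exp 2000) \<le> ln (ln x)" using lnx by (subst ln_le_cancel_iff) auto
    then show ?thesis using Log2_eq(1)[OF x100] by simp
  qed
  have lam0: "lam \<ge> 0" unfolding lam_def using y1 yx by (simp add: Log2_mono)
  have lampos: "lam > 0"
  proof (rule ccontr)
    assume "\<not> lam > 0"
    then have "lam = 0" using lam0 by simp
    then have "real k = 0" using kt unfolding lam_def by simp
    then show False using k1 by simp
  qed
  have tk: "t = real k / lam" using kt lampos unfolding lam_def by (simp add: field_simps)
  have klam: "real k \<le> 10 * lam"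
  proof -
    have "real k = t * lam" using kt unfolding lam_def by simp
    also have "\<dots> \<le> 10 * lam" using t10 lam0 by (intro mult_right_mono) auto
    finally show ?thesis .
  qed
  have lam10: "lam \<ge> 1 / 10" using klam k1 by simp
  have Bdef: "B = exp (- lam * Q (real k / lam)) / sqrt (real k)" unfolding B_def lam_def tk[unfolded lam_def] ..
  have finS: "finite S" unfolding S_def by simp
  have Sprime: "\<And>p. p \<in> S \<Longrightarrow> prime p" unfolding S_def by (rule primes_in_prime)
  have a0: "\<And>p. a p \<ge> 0" unfolding a_def by simp
  have Pe: "P = (\<Prod>p\<in>S. real p / (real p + 1)) * esym a S k"
    unfolding P_def S_def a_def by (rule prob_omega)
  define s where "s = rsum y x"
  have s_def': "s = sum a S" unfolding s_def rsum_def S_def a_def ..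
  have s0: "s \<ge> 0" unfolding s_def by (rule rsum_nonneg)
  have Sge1: "\<And>p. p \<in> S \<Longrightarrow> p \<ge> 1" using Sprime prime_ge_1_nat by blast
  have Pi_lo: "exp (- s) \<le> (\<Prod>p\<in>S. real p / (real p + 1))"
    using prod_ratio_bounds(1)[OF finS Sge1] unfolding s_def' a_def by simp
  have Pi_hi: "(\<Prod>p\<in>S. real p / (real p + 1)) \<le> exp (- s + 1 / 2)"
  proof -
    have "(\<Sum>p\<in>S. (1 / real p)\<^sup>2) \<le> 1 / (real (2::nat) - 1)"
      by (rule sum_inv_sq[OF finS]) (use Sprime prime_ge_2_nat in auto)
    then have "(\<Sum>p\<in>S. (1 / real p)\<^sup>2) / 2 \<le> 1 / 2" by simp
    then have "- s + (\<Sum>p\<in>S. (1 / real p)\<^sup>2) / 2 \<le> - s + 1 / 2" by simp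
    then show ?thesis using prod_ratio_bounds(2)[OF finS Sge1] unfolding s_def' a_def
      by (meson exp_le_cancel_iff order_trans)
  qed
  have es0: "esym a S k \<ge> 0" using a0 by (intro esym_nonneg) auto

  have eup: "esym a S k \<le> s ^ k / fact k"
    using esym_upper[OF finS, of a k] a0 unfolding s_def' by (simp add: field_simps)
  have "P \<le> exp (- s + 1 / 2) * (s ^ k / fact k)"
    unfolding Pe using Pi_hi eup es0 by (intro mult_mono) auto
  then have Pup': "P \<le> exp (- s + 1 / 2) * s ^ k / fact k" by simp
  have sA: "\<bar>s - lam\<bar> \<le> 225" unfolding s_def lam_def using mert_A[OF x100 y1 yx] .
  have upper: "P \<le> exp (9 * 225) * B"
    unfolding Bdef by (rule upper_core[OF k1 lampos s0 sA klam Pup'])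

  define y' where "y' = max y 401"
  define S' where "S' = primes_in y' x"
  define s' where "s' = rsum y' x"
  have s'_def': "s' = sum a S'" unfolding s'_def rsum_def S'_def a_def ..
  have S'S: "S' \<subseteq> S" unfolding S'_def S_def y'_def primes_in_def by auto
  have finS': "finite S'" using finite_subset[OF S'S finS] .
  have S'ge: "\<And>p. p \<in> S' \<Longrightarrow> p \<ge> 401"
  proof -
    fix p assume "p \<in> S'"
    then have "y' \<le> real p" unfolding S'_def primes_in_def by simp
    then have "(401::real) \<le> real p" unfolding y'_def by simp
    then show "p \<ge> 401" by simp
  qed
  have s2': "(\<Sum>p\<in>S'. (a p)\<^sup>2) \<le> 1 / 400"
  proof -
    have "(\<Sum>p\<in>S'. (1 / real p)\<^sup>2) \<le> 1 / (real (401::nat) - 1)"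
      by (rule sum_inv_sq[OF finS']) (use S'ge in auto)
    then show ?thesis unfolding a_def by simp
  qed
  have s20: "(\<Sum>p\<in>S'. (a p)\<^sup>2) \<ge> 0" by (intro sum_nonneg) auto
  have ss': "s - s' \<le> 402" "0 \<le> s - s'" using mert_C(2,3)[OF x401 y1 yx] unfolding s_def s'_def y'_def by auto
  have key: "s' > 0 \<and> \<bar>s' - lam\<bar> \<le> 425 \<and> real k \<le> 20 * s'"
  proof (cases "exp 480 \<le> y")
    case True
    have "(481::real) \<le> 1 + 480" by simp
    also have "1 + (480::real) \<le> exp 480" by (rule exp_ge_add_one_self)
    finally have "401 \<le> y" using True by simp
    then have "y' = y" unfolding y'_def by simp
    then have "s' = s" unfolding s'_def s_def by simp
    moreover have h: "\<bar>s - lam\<bar> \<le> 1 / 20" unfolding s_def lam_def by (rule mert_B[OF True yx])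
    moreover have "s - lam \<le> 1 / 20" "lam - s \<le> 1 / 20" using abs_le_D1[OF h] abs_le_D2[OF h] by linarith+
    ultimately show ?thesis using lam10 klam by (simp add: abs_le_iff)
  next
    case False
    have "Log2 y \<le> Log2 (exp 480)" using False y1 by (intro Log2_mono) auto
    also have "Log2 (exp 480) = ln (ln (exp 480))"
    proof (rule Log2_eq(1))
      have "(481::real) \<le> 1 + 480" by simp
      also have "1 + (480::real) \<le> exp 480" by (rule exp_ge_add_one_self)
      finally show "100 \<le> exp (480::real)" by simp
    qed
    also have "\<dots> = ln 480" by simp
    also have "\<dots> \<le> 480 - 1" by (rule ln_le_minus_one) simp
    finally have "Log2 y \<le> 479" by simp
    then have lbig: "lam \<ge> 1521" unfolding lam_def using Lx by simp
    have "\<bar>s' - lam\<bar> \<le> 425" unfolding s'_def lam_def y'_def by (rule mert_C(1)[OF x401 y1 yx])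
    moreover have "s' - lam \<le> 425" "lam - s' \<le> 425" using abs_le_D1[OF calculation] abs_le_D2[OF calculation] by linarith+
    ultimately show ?thesis using lbig klam by (simp add: abs_le_iff)
  qed
  have s'0: "s' > 0" and sC: "\<bar>s' - lam\<bar> \<le> 425" and ks': "real k \<le> 20 * s'" using key by auto
  have elo: "fact k * esym a S' k \<ge> LB s' (\<Sum>p\<in>S'. (a p)\<^sup>2) k"
    using esym_lower[OF finS', of a k] a0 unfolding s'_def' by simp
  have "LB s' (\<Sum>p\<in>S'. (a p)\<^sup>2) k \<ge> s' ^ k / 2" by (rule LB_half[OF s'0 s20 s2' ks'])
  then have "fact k * esym a S' k \<ge> s' ^ k / 2" using elo by linarith
  then have e1: "esym a S' k \<ge> s' ^ k / (2 * fact k)" by (simp add: field_simps)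
  have e2: "esym a S' k \<le> esym a S k" using esym_mono[OF finS S'S] a0 by auto
  have Pi_lo': "exp (- (s' + 402)) \<le> (\<Prod>p\<in>S. real p / (real p + 1))"
  proof -
    have "exp (- (s' + 402)) \<le> exp (- s)" using ss' by simp
    then show ?thesis using Pi_lo by linarith
  qed
  have "exp (- (s' + 402)) * (s' ^ k / (2 * fact k)) \<le> P"
  proof -
    have Pi0: "0 \<le> (\<Prod>p\<in>S. real p / (real p + 1))" using Pi_lo' exp_gt_zero[of "- (s' + 402)"] by linarith
    have "s' ^ k / (2 * fact k) \<le> esym a S k" using e1 e2 by linarith
    moreover have "0 \<le> s' ^ k / (2 * fact k)" using s'0 by simp
    ultimately show ?thesis unfolding Pe using Pi_lo' Pi0 by (intro mult_mono) auto
  qed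
  then have Plo': "P \<ge> exp (- (s' + 402)) * s' ^ k / (2 * fact k)" by simp
  have lower: "P \<ge> exp (- (402 + 21 * 425 + ln 2 + 1)) * B"
    unfolding Bdef by (rule lower_core[OF k1 lampos s'0 sC ks' Plo'])
  show ?thesis using upper lower by simp
qed

theorem proposition2p3:
  "\<exists>c C X0. c > 0 \<and> C > 0 \<and>
    (\<forall>x y t. \<forall>k::nat. X0 \<le> x \<longrightarrow> 1 \<le> y \<longrightarrow> y \<le> x \<longrightarrow> 1 \<le> k \<longrightarrow> t \<le> 10 \<longrightarrow>
       real k = t * (Log2 x - Log2 y) \<longrightarrow>
       (let P = measure_pmf.prob (np_model y x) {f. omega (n_interval y x f) = k};
            B = exp (- (Log2 x - Log2 y) * Q t) / sqrt (real k)
        in c * B \<le> P \<and> P \<le> C * B))"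
proof (intro exI conjI allI impI)
  show "exp (- (402 + 21 * 425 + ln 2 + 1)) > (0::real)" by simp
  show "exp (9 * 225) > (0::real)" by simp
  fix x y t :: real and k :: nat
  assume "exp (exp 2000) \<le> x" "1 \<le> y" "y \<le> x" "1 \<le> k" "t \<le> 10" "real k = t * (Log2 x - Log2 y)"
  then show "let P = measure_pmf.prob (np_model y x) {f. omega (n_interval y x f) = k};
            B = exp (- (Log2 x - Log2 y) * Q t) / sqrt (real k)
        in exp (- (402 + 21 * 425 + ln 2 + 1)) * B \<le> P \<and> P \<le> exp (9 * 225) * B"
    unfolding Let_def by (rule main_bounds)
qed


end
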